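(* Let $m\in\{1,2\}$, $K>0$, $\gamma=3$, $\Omega=[a,b]\subset(0,\infty)$, $T>0$, and let $(\rho,u)$ be a smooth solution ($\rho>0$) of the radially symmetric isentropic Euler equations $$(r^m\rho)_t+(r^m\rho u)_r=0,\qquad (r^m\rho u)_t+(r^m\rho u^2)_r+r^m p_r=0,\qquad p=K\rho^\gamma,$$ on the domain of influence $D(\Omega,T)$, in the supersonic inward regime $c_1<c_2<0$. If $\alpha(r,0)>0$ and $\beta(r,0)<0$ for all $r\in\Omega$, then $\alpha(r,t)>0$ and $\beta(r,t)<0$ for all $(r,t)\in D(\Omega,T)$. Similarly, if $\alpha(r,0)<0$ and $\beta(r,0)>0$ for all $r\in\Omega$, then $\alpha(r,t)<0$ and $\beta(r,t)>0$ for all $(r,t)\in D(\Omega,T)$.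
   Context: Here $h=\sqrt{K\gamma}\,\rho^{(\gamma-1)/2}$, $c_1=u-h$, $c_2=u+h$, $$\alpha=u_r+\tfrac{2}{\gamma-1}h_r+\tfrac{m}{r}\tfrac{hu}{c_2},\qquad \beta=u_r-\tfrac{2}{\gamma-1}h_r-\tfrac{m}{r}\tfrac{hu}{c_1}.$$ Characteristic flow maps: $\partial_t\xi(r_0,t)=c_1(\xi(r_0,t),t)$, $\partial_t\psi(r_0,t)=c_2(\psi(r_0,t),t)$, $\xi(r_0,0)=\psi(r_0,0)=r_0$. The domain of influence $D(\Omega,T)$ is the set of $(r,t)\in\mathbb{R}\times[0,T]$ for which there exist $r_1,r_2\in\Omega$ with $\psi(r_1,t)=\xi(r_2,t)=r$. *)

theory Defs
  imports "HOL-Analysis.Analysis"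
begin

definition pd_r :: "(real \<times> real \<Rightarrow> real) \<Rightarrow> real \<times> real \<Rightarrow> real" where
  "pd_r f x = frechet_derivative f (at x) (1, 0)"

definition pd_t :: "(real \<times> real \<Rightarrow> real) \<Rightarrow> real \<times> real \<Rightarrow> real" where
  "pd_t f x = frechet_derivative f (at x) (0, 1)"

fun Ck_on :: "nat \<Rightarrow> (real \<times> real) set \<Rightarrow> (real \<times> real \<Rightarrow> real) \<Rightarrow> bool" where
  "Ck_on 0 U f = continuous_on U f"
| "Ck_on (Suc k) U f = ((\<forall>x\<in>U. f differentiable (at x)) \<and>
      Ck_on k U (pd_r f) \<and> Ck_on k U (pd_t f))"

definition smooth_on2 :: "(real \<times> real) set \<Rightarrow> (real \<times> real \<Rightarrow> real) \<Rightarrow> bool" where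
  "smooth_on2 U f = (\<forall>k. Ck_on k U f)"

definition hh :: "real \<Rightarrow> real \<Rightarrow> (real \<times> real \<Rightarrow> real) \<Rightarrow> real \<times> real \<Rightarrow> real" where
  "hh K \<gamma> \<rho> x = sqrt (K * \<gamma>) * (\<rho> x) powr ((\<gamma> - 1) / 2)"

definition c1 :: "real \<Rightarrow> real \<Rightarrow> (real \<times> real \<Rightarrow> real) \<Rightarrow> (real \<times> real \<Rightarrow> real) \<Rightarrow> real \<times> real \<Rightarrow> real" where
  "c1 K \<gamma> \<rho> u x = u x - hh K \<gamma> \<rho> x"

definition c2 :: "real \<Rightarrow> real \<Rightarrow> (real \<times> real \<Rightarrow> real) \<Rightarrow> (real \<times> real \<Rightarrow> real) \<Rightarrow> real \<times> real \<Rightarrow> real" where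
  "c2 K \<gamma> \<rho> u x = u x + hh K \<gamma> \<rho> x"

definition alpha :: "nat \<Rightarrow> real \<Rightarrow> real \<Rightarrow> (real \<times> real \<Rightarrow> real) \<Rightarrow> (real \<times> real \<Rightarrow> real) \<Rightarrow> real \<times> real \<Rightarrow> real" where
  "alpha m K \<gamma> \<rho> u x = pd_r u x + 2 / (\<gamma> - 1) * pd_r (hh K \<gamma> \<rho>) x
     + real m / fst x * (hh K \<gamma> \<rho> x * u x / c2 K \<gamma> \<rho> u x)"

definition beta :: "nat \<Rightarrow> real \<Rightarrow> real \<Rightarrow> (real \<times> real \<Rightarrow> real) \<Rightarrow> (real \<times> real \<Rightarrow> real) \<Rightarrow> real \<times> real \<Rightarrow> real" where
  "beta m K \<gamma> \<rho> u x = pd_r u x - 2 / (\<gamma> - 1) * pd_r (hh K \<gamma> \<rho>) x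
     - real m / fst x * (hh K \<gamma> \<rho> x * u x / c1 K \<gamma> \<rho> u x)"

definition dom_infl :: "(real \<Rightarrow> real \<Rightarrow> real) \<Rightarrow> (real \<Rightarrow> real \<Rightarrow> real) \<Rightarrow> real set \<Rightarrow> real \<Rightarrow> (real \<times> real) set" where
  "dom_infl \<xi> \<psi> \<Omega> T = {(r, t). t \<in> {0..T} \<and> (\<exists>r1\<in>\<Omega>. \<exists>r2\<in>\<Omega>. \<psi> r1 t = r \<and> \<xi> r2 t = r)}"

end

theory Submission
  imports Defs "HOL-Analysis.Analysis"
begin

abbreviation HD :: "(real \<times> real \<Rightarrow> real) \<Rightarrow> real \<times> real \<Rightarrow> real \<Rightarrow> real \<Rightarrow> bool" where
  "HD f x fr ft \<equiv> (f has_derivative (\<lambda>v. fst v * fr + snd v * ft)) (at x)"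

lemma pd_of_HD: assumes "HD f x a b" shows "pd_r f x = a" "pd_t f x = b"
  by (simp_all add: pd_r_def pd_t_def frechet_derivative_at[OF assms, symmetric])

lemma HD_of_diff: assumes "f differentiable (at x)" shows "HD f x (pd_r f x) (pd_t f x)"
proof -
  let ?D = "frechet_derivative f (at x)"
  have d: "(f has_derivative ?D) (at x)" using assms frechet_derivative_works by blast
  then have lin: "linear ?D" using has_derivative_linear by blast
  have "?D v = fst v * pd_r f x + snd v * pd_t f x" for v
  proof -
    have "v = fst v *\<^sub>R (1,0) + snd v *\<^sub>R (0,1)" by (cases v) simp
    then have "?D v = ?D (fst v *\<^sub>R (1,0) + snd v *\<^sub>R (0,1))" by simp
    also have "\<dots> = fst v *\<^sub>R ?D (1,0) + snd v *\<^sub>R ?D (0,1)"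
      by (simp only: linear_add[OF lin] linear_scale[OF lin])
    finally show ?thesis by (simp add: pd_r_def pd_t_def)
  qed
  then have "?D = (\<lambda>v. fst v * pd_r f x + snd v * pd_t f x)" by auto
  then show ?thesis using d by simp
qed

lemma HD_local: assumes "HD f x a b" "open U" "x \<in> U" "\<And>y. y \<in> U \<Longrightarrow> f y = g y"
  shows "HD g x a b"
  using has_derivative_transform_within_open[OF assms(1-3)] assms(4) by blast

lemma HD_curve: assumes "(g has_real_derivative v) (at s within S)" "HD F (g s, s) Fr Ft"
  shows "((\<lambda>s. F (g s, s)) has_real_derivative (Fr * v + Ft)) (at s within S)"
proof -
  have c: "((\<lambda>s. (g s, s)) has_derivative (\<lambda>h. (h * v, h))) (at s within S)"
    using assms(1) unfolding has_field_derivative_def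
    by (intro has_derivative_Pair has_derivative_ident) (simp add: mult_commute_abs)
  have F: "(F has_derivative (\<lambda>v. fst v * Fr + snd v * Ft)) (at (g s, s) within (\<lambda>s. (g s, s)) ` S)"
    using assms(2) has_derivative_at_withinI by blast
  have "((\<lambda>s. F (g s, s)) has_derivative (\<lambda>h. h * v * Fr + h * Ft)) (at s within S)"
    using has_derivative_in_compose[OF c F] by simp
  then show ?thesis unfolding has_field_derivative_def
    by (rule has_derivative_eq_rhs) (auto simp: algebra_simps)
qed

lemma HD_horiz: assumes "HD F (s, y) Fr Ft"
  shows "((\<lambda>s. F (s, y)) has_real_derivative Fr) (at s)"
proof -
  have c: "((\<lambda>s. (s, y)) has_derivative (\<lambda>h. (h, 0))) (at s)"
    by (intro has_derivative_Pair has_derivative_ident has_derivative_const)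
  have "((\<lambda>s. F (s, y)) has_derivative (\<lambda>h. h * Fr)) (at s)"
    using has_derivative_compose[OF c assms] by simp
  then show ?thesis unfolding has_field_derivative_def by (simp add: mult_commute_abs)
qed

lemma HD_vert: assumes "HD F (y, s) Fr Ft"
  shows "((\<lambda>s. F (y, s)) has_real_derivative Ft) (at s)"
proof -
  have c: "((\<lambda>s. (y, s)) has_derivative (\<lambda>h. (0, h))) (at s)"
    by (intro has_derivative_Pair has_derivative_ident has_derivative_const)
  have "((\<lambda>s. F (y, s)) has_derivative (\<lambda>h. h * Ft)) (at s)"
    using has_derivative_compose[OF c assms] by simp
  then show ?thesis unfolding has_field_derivative_def by (simp add: mult_commute_abs)
qed

lemma dist_pair_le: "dist (a::real, b::real) (c, d) \<le> \<bar>a - c\<bar> + \<bar>b - d\<bar>"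
  using sqrt_sum_squares_le_sum_abs[of "a - c" "b - d"] by (simp add: dist_Pair_Pair dist_real_def)

lemma clairaut:
  assumes U: "open U" and x: "x \<in> U"
    and df: "\<And>y. y \<in> U \<Longrightarrow> f differentiable (at y)"
    and dfr: "\<And>y. y \<in> U \<Longrightarrow> pd_r f differentiable (at y)"
    and dft: "\<And>y. y \<in> U \<Longrightarrow> pd_t f differentiable (at y)"
    and cF: "continuous_on U (pd_t (pd_r f))"
    and cG: "continuous_on U (pd_r (pd_t f))"
  shows "pd_t (pd_r f) x = pd_r (pd_t f) x"
proof (rule ccontr)
  define F where "F = pd_t (pd_r f)"
  define G where "G = pd_r (pd_t f)"
  assume "pd_t (pd_r f) x \<noteq> pd_r (pd_t f) x"
  then have dpos: "\<bar>F x - G x\<bar> > 0" by (simp add: F_def G_def)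
  define d where "d = \<bar>F x - G x\<bar>"
  obtain e where e: "e > 0" "ball x e \<subseteq> U" using U x open_contains_ball by blast
  have "continuous (at x) F" using cF U x by (simp add: F_def continuous_on_eq_continuous_at)
  then obtain d1 where d1: "d1 > 0" "\<And>p. dist p x < d1 \<Longrightarrow> dist (F p) (F x) < d / 2"
    using dpos unfolding continuous_at_eps_delta d_def by (metis half_gt_zero)
  have "continuous (at x) G" using cG U x by (simp add: G_def continuous_on_eq_continuous_at)
  then obtain d2 where d2: "d2 > 0" "\<And>p. dist p x < d2 \<Longrightarrow> dist (G p) (G x) < d / 2"
    using dpos unfolding continuous_at_eps_delta d_def by (metis half_gt_zero)
  obtain x0 y0 where xe: "x = (x0, y0)" by (cases x)
  define h where "h = min e (min d1 d2) / 3"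
  have hpos: "h > 0" using e d1 d2 by (simp add: h_def)
  have box: "dist (p, q) x < min e (min d1 d2)" if "x0 \<le> p" "p \<le> x0 + h" "y0 \<le> q" "q \<le> y0 + h" for p q
  proof -
    have "dist (p, q) x \<le> \<bar>p - x0\<bar> + \<bar>q - y0\<bar>" using dist_pair_le xe by simp
    also have "\<dots> \<le> 2 * h" using that by simp
    also have "\<dots> < min e (min d1 d2)" using hpos e(1) d1(1) d2(1) unfolding h_def by linarith
    finally show ?thesis .
  qed
  have inU: "(p, q) \<in> U" if "x0 \<le> p" "p \<le> x0 + h" "y0 \<le> q" "q \<le> y0 + h" for p q
    using box[OF that] e(2) by (auto simp: dist_commute)
  have der1: "DERIV (\<lambda>s. f (s, y0 + h) - f (s, y0)) s :> (pd_r f (s, y0 + h) - pd_r f (s, y0))"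
    if "x0 \<le> s" "s \<le> x0 + h" for s
    using that hpos by (intro DERIV_diff HD_horiz[OF HD_of_diff[OF df]] inU) auto
  obtain s1 where s1: "x0 < s1" "s1 < x0 + h"
    "(f (x0 + h, y0 + h) - f (x0 + h, y0)) - (f (x0, y0 + h) - f (x0, y0))
      = h * (pd_r f (s1, y0 + h) - pd_r f (s1, y0))"
    using MVT2[of x0 "x0 + h" "\<lambda>s. f (s, y0 + h) - f (s, y0)", OF _ der1] hpos by auto
  have der2: "DERIV (\<lambda>q. pd_r f (s1, q)) q :> F (s1, q)" if "y0 \<le> q" "q \<le> y0 + h" for q
    unfolding F_def using that s1 by (intro HD_vert[OF HD_of_diff[OF dfr]] inU) auto
  obtain t1 where t1: "y0 < t1" "t1 < y0 + h" "pd_r f (s1, y0 + h) - pd_r f (s1, y0) = h * F (s1, t1)"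
    using MVT2[of y0 "y0 + h" "\<lambda>q. pd_r f (s1, q)", OF _ der2] hpos by auto
  have der3: "DERIV (\<lambda>q. f (x0 + h, q) - f (x0, q)) q :> (pd_t f (x0 + h, q) - pd_t f (x0, q))"
    if "y0 \<le> q" "q \<le> y0 + h" for q
    using that hpos by (intro DERIV_diff HD_vert[OF HD_of_diff[OF df]] inU) auto
  obtain t2 where t2: "y0 < t2" "t2 < y0 + h"
    "(f (x0 + h, y0 + h) - f (x0, y0 + h)) - (f (x0 + h, y0) - f (x0, y0))
      = h * (pd_t f (x0 + h, t2) - pd_t f (x0, t2))"
    using MVT2[of y0 "y0 + h" "\<lambda>q. f (x0 + h, q) - f (x0, q)", OF _ der3] hpos by auto
  have der4: "DERIV (\<lambda>s. pd_t f (s, t2)) s :> G (s, t2)" if "x0 \<le> s" "s \<le> x0 + h" for s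
    unfolding G_def using that t2 by (intro HD_horiz[OF HD_of_diff[OF dft]] inU) auto
  obtain s2 where s2: "x0 < s2" "s2 < x0 + h" "pd_t f (x0 + h, t2) - pd_t f (x0, t2) = h * G (s2, t2)"
    using MVT2[of x0 "x0 + h" "\<lambda>s. pd_t f (s, t2)", OF _ der4] hpos by auto
  have "h * (h * F (s1, t1)) = h * (h * G (s2, t2))"
    using s1(3) t1(3) t2(3) s2(3) by (simp add: algebra_simps)
  then have FG: "F (s1, t1) = G (s2, t2)" using hpos by simp
  have "dist (F (s1, t1)) (F x) < d / 2" using d1(2) box[of s1 t1] s1 t1 by auto
  moreover have "dist (G (s2, t2)) (G x) < d / 2" using d2(2) box[of s2 t2] s2 t2 by auto
  ultimately have "\<bar>F x - G x\<bar> < d" using FG unfolding dist_real_def by linarith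
  then show False by (simp add: d_def)
qed

lemma HD_const: "HD (\<lambda>y. c) x 0 0"
  by (rule has_derivative_eq_rhs[OF has_derivative_const]) auto
lemma HD_fst: "HD fst x 1 0"
  by (rule has_derivative_eq_rhs[OF has_derivative_fst[OF has_derivative_ident]]) auto
lemma HD_snd: "HD snd x 0 1"
  by (rule has_derivative_eq_rhs[OF has_derivative_snd[OF has_derivative_ident]]) auto
lemma HD_add: assumes "HD f x a b" "HD g x c d" shows "HD (\<lambda>y. f y + g y) x (a + c) (b + d)"
  using has_derivative_add[OF assms] by (rule has_derivative_eq_rhs) (auto simp: algebra_simps)
lemma HD_diff: assumes "HD f x a b" "HD g x c d" shows "HD (\<lambda>y. f y - g y) x (a - c) (b - d)"
  using has_derivative_diff[OF assms] by (rule has_derivative_eq_rhs) (auto simp: algebra_simps)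
lemma HD_mult: assumes "HD f x a b" "HD g x c d" shows
   "HD (\<lambda>y. f y * g y) x (f x * c + a * g x) (f x * d + b * g x)"
  using has_derivative_mult[OF assms] by (rule has_derivative_eq_rhs) (auto simp: algebra_simps)
lemma HD_cmult: assumes "HD f x a b" shows "HD (\<lambda>y. c * f y) x (c * a) (c * b)"
  using has_derivative_mult[OF has_derivative_const assms] by (rule has_derivative_eq_rhs) (auto simp: algebra_simps)
lemma HD_div: assumes "HD f x a b" "HD g x c d" "g x \<noteq> 0" shows
   "HD (\<lambda>y. f y / g y) x ((a * g x - f x * c) / (g x)\<^sup>2) ((b * g x - f x * d) / (g x)\<^sup>2)"
  using has_derivative_divide[OF assms] by (rule has_derivative_eq_rhs) (use assms(3) in \<open>auto simp: fun_eq_iff field_simps power2_eq_square\<close>)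
lemma HD_pow: assumes "HD f x a b" shows
   "HD (\<lambda>y. f y ^ n) x (real n * f x ^ (n - 1) * a) (real n * f x ^ (n - 1) * b)"
  using has_derivative_power[OF assms] by (rule has_derivative_eq_rhs) (auto simp: algebra_simps)

lemma HD_zero: assumes "HD f x a b" "open U" "x \<in> U" "\<And>y. y \<in> U \<Longrightarrow> f y = 0"
  shows "a = 0" "b = 0"
proof -
  have "HD (\<lambda>y. 0) x a b" using HD_local[OF assms(1-3)] assms(4) by metis
  from pd_of_HD[OF this] pd_of_HD[OF HD_const[of 0 x]] show "a = 0" "b = 0" by auto
qed

lemma alg_alpha0:
  fixes u H ur Hr urr Hrr utr Htr ut Ht r m :: real
  assumes r: "r > 0" and W: "u + H \<noteq> 0" and Z: "u - H \<noteq> 0"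
   and E1: "Ht + u*Hr + H*ur + m*H*u/r = 0"
   and E2: "ut + u*ur + H*Hr = 0"
   and E1r: "Htr + 2*ur*Hr + u*Hrr + H*urr + m*(Hr*u + H*ur)/r - m*H*u/r\<^sup>2 = 0"
   and E2r: "utr + ur\<^sup>2 + u*urr + (Hr\<^sup>2 + H*Hrr) = 0"
  shows "(utr + Htr + m/r * ((Ht*u + H*ut)*(u+H) - H*u*(ut + Ht))/(u+H)\<^sup>2)
     + (u+H) * (urr + Hrr + m/r * ((Hr*u + H*ur)*(u+H) - H*u*(ur + Hr))/(u+H)\<^sup>2 - m/r\<^sup>2*(H*u/(u+H)))
   = - (ur + Hr + m/r*(H*u/(u+H)))\<^sup>2 + 2*(m*H*u/r)/(u+H)*(ur + Hr + m/r*(H*u/(u+H)))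
     + m/(2*r*(u+H))*((u-H)\<^sup>2*(ur - Hr - m/r*(H*u/(u-H))) - (u+H)\<^sup>2*(ur + Hr + m/r*(H*u/(u+H))))"
proof -
  have Ht: "Ht = -(u*Hr + H*ur + m*H*u/r)" using E1 by linarith
  have ut: "ut = -(u*ur + H*Hr)" using E2 by linarith
  have Htr: "Htr = -(2*ur*Hr + u*Hrr + H*urr + m*(Hr*u + H*ur)/r - m*H*u/r\<^sup>2)" using E1r by linarith
  have utr: "utr = -(ur\<^sup>2 + u*urr + (Hr\<^sup>2 + H*Hrr))" using E2r by linarith
  define w where "w = u + H"
  define z where "z = u - H"
  have u: "u = (w + z)/2" and H: "H = (w - z)/2" by (simp_all add: w_def z_def)
  have w: "w \<noteq> 0" "z \<noteq> 0" using W Z by (simp_all add: w_def z_def)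
  show ?thesis unfolding Ht ut Htr utr unfolding u H using r w
    by (simp add: field_simps power2_eq_square)
qed

lemma alg_beta0:
  fixes u H ur Hr urr Hrr utr Htr ut Ht r m :: real
  assumes r: "r > 0" and W: "u + H \<noteq> 0" and Z: "u - H \<noteq> 0"
   and E1: "Ht + u*Hr + H*ur + m*H*u/r = 0"
   and E2: "ut + u*ur + H*Hr = 0"
   and E1r: "Htr + 2*ur*Hr + u*Hrr + H*urr + m*(Hr*u + H*ur)/r - m*H*u/r\<^sup>2 = 0"
   and E2r: "utr + ur\<^sup>2 + u*urr + (Hr\<^sup>2 + H*Hrr) = 0"
  shows "(utr - Htr - m/r * ((Ht*u + H*ut)*(u-H) - H*u*(ut - Ht))/(u-H)\<^sup>2)
     + (u-H) * (urr - Hrr - m/r * ((Hr*u + H*ur)*(u-H) - H*u*(ur - Hr))/(u-H)\<^sup>2 + m/r\<^sup>2*(H*u/(u-H)))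
   = - (ur - Hr - m/r*(H*u/(u-H)))\<^sup>2 - 2*(m*H*u/r)/(u-H)*(ur - Hr - m/r*(H*u/(u-H)))
     - m/(2*r*(u-H))*((u-H)\<^sup>2*(ur - Hr - m/r*(H*u/(u-H))) - (u+H)\<^sup>2*(ur + Hr + m/r*(H*u/(u+H))))"
proof -
  have Ht: "Ht = -(u*Hr + H*ur + m*H*u/r)" using E1 by linarith
  have ut: "ut = -(u*ur + H*Hr)" using E2 by linarith
  have Htr: "Htr = -(2*ur*Hr + u*Hrr + H*urr + m*(Hr*u + H*ur)/r - m*H*u/r\<^sup>2)" using E1r by linarith
  have utr: "utr = -(ur\<^sup>2 + u*urr + (Hr\<^sup>2 + H*Hrr))" using E2r by linarith
  define w where "w = u + H"
  define z where "z = u - H"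
  have u: "u = (w + z)/2" and H: "H = (w - z)/2" by (simp_all add: w_def z_def)
  have w: "w \<noteq> 0" "z \<noteq> 0" using W Z by (simp_all add: w_def z_def)
  show ?thesis unfolding Ht ut Htr utr unfolding u H using r w
    by (simp add: field_simps power2_eq_square)
qed

lemma smooth_all:
  assumes "smooth_on2 U f"
  shows "\<And>y. y \<in> U \<Longrightarrow> f differentiable (at y)"
    "\<And>y. y \<in> U \<Longrightarrow> pd_r f differentiable (at y)"
    "\<And>y. y \<in> U \<Longrightarrow> pd_t f differentiable (at y)"
    "continuous_on U (pd_t (pd_r f))" "continuous_on U (pd_r (pd_t f))"
    "continuous_on U (pd_r f)" "continuous_on U (pd_t f)" "continuous_on U f"
proof -
  have "Ck_on (Suc (Suc 0)) U f" using assms unfolding smooth_on2_def by blast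
  then have A: "\<forall>y\<in>U. f differentiable (at y)" "\<forall>y\<in>U. pd_r f differentiable (at y)"
    "\<forall>y\<in>U. pd_t f differentiable (at y)"
    "continuous_on U (pd_t (pd_r f))" "continuous_on U (pd_r (pd_t f))"
    by auto
  then show "\<And>y. y \<in> U \<Longrightarrow> f differentiable (at y)"
    "\<And>y. y \<in> U \<Longrightarrow> pd_r f differentiable (at y)"
    "\<And>y. y \<in> U \<Longrightarrow> pd_t f differentiable (at y)"
    "continuous_on U (pd_t (pd_r f))" "continuous_on U (pd_r (pd_t f))" by auto
  show "continuous_on U (pd_r f)" "continuous_on U (pd_t f)" "continuous_on U f"
    using A(1-3) by (auto intro!: continuous_at_imp_continuous_on differentiable_imp_continuous_within)
qed

locale eul =
  fixes m :: nat and K \<gamma> a b T :: real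
    and \<rho> u :: "real \<times> real \<Rightarrow> real"
    and \<xi> \<psi> :: "real \<Rightarrow> real \<Rightarrow> real"
    and U :: "(real \<times> real) set"
  assumes m: "m \<in> {1, 2}"
    and K: "K > 0"
    and gam: "\<gamma> = 3"
    and ab: "0 < a" "a \<le> b"
    and T: "T > 0"
    and U_open: "open U"
    and U_pos: "U \<subseteq> {x. fst x > 0}"
    and smooth_rho: "smooth_on2 U \<rho>"
    and smooth_u: "smooth_on2 U u"
    and rho_pos: "\<forall>x\<in>U. \<rho> x > 0"
    and mass: "\<forall>x\<in>U. pd_t (\<lambda>(r, t). r ^ m * \<rho> (r, t)) x
                       + pd_r (\<lambda>(r, t). r ^ m * \<rho> (r, t) * u (r, t)) x = 0"
    and momentum: "\<forall>x\<in>U. pd_t (\<lambda>(r, t). r ^ m * \<rho> (r, t) * u (r, t)) x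
                       + pd_r (\<lambda>(r, t). r ^ m * \<rho> (r, t) * (u (r, t))\<^sup>2) x
                       + (fst x) ^ m * pd_r (\<lambda>y. K * (\<rho> y) powr \<gamma>) x = 0"
    and xi_dom: "\<forall>r0\<in>{a..b}. \<forall>t\<in>{0..T}. (\<xi> r0 t, t) \<in> U"
    and psi_dom: "\<forall>r0\<in>{a..b}. \<forall>t\<in>{0..T}. (\<psi> r0 t, t) \<in> U"
    and xi_ode: "\<forall>r0\<in>{a..b}. \<forall>t\<in>{0..T}.
                   ((\<xi> r0) has_real_derivative c1 K \<gamma> \<rho> u (\<xi> r0 t, t)) (at t within {0..T})"
    and psi_ode: "\<forall>r0\<in>{a..b}. \<forall>t\<in>{0..T}.
                   ((\<psi> r0) has_real_derivative c2 K \<gamma> \<rho> u (\<psi> r0 t, t)) (at t within {0..T})"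
    and xi_init: "\<forall>r0\<in>{a..b}. \<xi> r0 0 = r0"
    and psi_init: "\<forall>r0\<in>{a..b}. \<psi> r0 0 = r0"
    and supersonic: "\<forall>x\<in>dom_infl \<xi> \<psi> {a..b} T.
                       c1 K \<gamma> \<rho> u x < c2 K \<gamma> \<rho> u x \<and> c2 K \<gamma> \<rho> u x < 0"
begin

definition k where "k = sqrt (K * \<gamma>)"

lemma k_pos: "k > 0" and k2: "k\<^sup>2 = 3 * K"
  unfolding k_def using K gam by auto

lemmas su = smooth_all[OF smooth_u]
lemmas sp = smooth_all[OF smooth_rho]

lemma HDu: "y \<in> U \<Longrightarrow> HD u y (pd_r u y) (pd_t u y)" by (rule HD_of_diff[OF su(1)])
lemma HDur: "y \<in> U \<Longrightarrow> HD (pd_r u) y (pd_r (pd_r u) y) (pd_t (pd_r u) y)" by (rule HD_of_diff[OF su(2)])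
lemma HDut: "y \<in> U \<Longrightarrow> HD (pd_t u) y (pd_r (pd_t u) y) (pd_t (pd_t u) y)" by (rule HD_of_diff[OF su(3)])
lemma HDp: "y \<in> U \<Longrightarrow> HD \<rho> y (pd_r \<rho> y) (pd_t \<rho> y)" by (rule HD_of_diff[OF sp(1)])
lemma HDpr: "y \<in> U \<Longrightarrow> HD (pd_r \<rho>) y (pd_r (pd_r \<rho>) y) (pd_t (pd_r \<rho>) y)" by (rule HD_of_diff[OF sp(2)])
lemma HDpt: "y \<in> U \<Longrightarrow> HD (pd_t \<rho>) y (pd_r (pd_t \<rho>) y) (pd_t (pd_t \<rho>) y)" by (rule HD_of_diff[OF sp(3)])

lemma symu: "y \<in> U \<Longrightarrow> pd_t (pd_r u) y = pd_r (pd_t u) y"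
  by (rule clairaut[OF U_open _ su(1-5)])
lemma symp: "y \<in> U \<Longrightarrow> pd_t (pd_r \<rho>) y = pd_r (pd_t \<rho>) y"
  by (rule clairaut[OF U_open _ sp(1-5)])

lemma rpos: "y \<in> U \<Longrightarrow> fst y > 0" using U_pos by auto
lemma ppos: "y \<in> U \<Longrightarrow> \<rho> y > 0" using rho_pos by auto

lemma hh_U: "y \<in> U \<Longrightarrow> hh K \<gamma> \<rho> y = k * \<rho> y"
  unfolding hh_def k_def using ppos[of y] gam by simp

lemma c1_U: "y \<in> U \<Longrightarrow> c1 K \<gamma> \<rho> u y = u y - k * \<rho> y" by (simp add: c1_def hh_U)
lemma c2_U: "y \<in> U \<Longrightarrow> c2 K \<gamma> \<rho> u y = u y + k * \<rho> y" by (simp add: c2_def hh_U)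

lemma HDh: "y \<in> U \<Longrightarrow> HD (hh K \<gamma> \<rho>) y (k * pd_r \<rho> y) (k * pd_t \<rho> y)"
  by (rule HD_local[OF HD_cmult[OF HDp] U_open]) (auto simp: hh_U)

lemma E1: assumes y: "y \<in> U"
  shows "pd_t \<rho> y + u y * pd_r \<rho> y + \<rho> y * pd_r u y + real m * \<rho> y * u y / fst y = 0"
proof -
  obtain n where mn: "m = Suc n" using m by auto
  define r where "r = fst y"
  have r: "r > 0" using rpos[OF y] by (simp add: r_def)
  have f1: "(\<lambda>(r, t). r ^ m * \<rho> (r, t)) = (\<lambda>y. fst y ^ m * \<rho> y)" by (auto simp: fun_eq_iff)
  have f2: "(\<lambda>(r, t). r ^ m * \<rho> (r, t) * u (r, t)) = (\<lambda>y. fst y ^ m * \<rho> y * u y)" by (auto simp: fun_eq_iff)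
  note h1 = pd_of_HD[OF HD_mult[OF HD_pow[OF HD_fst] HDp[OF y]], of m]
  note h2 = pd_of_HD[OF HD_mult[OF HD_mult[OF HD_pow[OF HD_fst] HDp[OF y]] HDu[OF y]], of m]
  have "pd_t (\<lambda>y. fst y ^ m * \<rho> y) y + pd_r (\<lambda>y. fst y ^ m * \<rho> y * u y) y = 0"
    using mass y f1 f2 by auto
  then have "r ^ m * (pd_t \<rho> y + u y * pd_r \<rho> y + \<rho> y * pd_r u y + real m * \<rho> y * u y / r) = 0"
    unfolding h1 h2 using r by (simp add: mn r_def field_simps)
  then show ?thesis using r by (simp add: r_def)
qed

lemma E2: assumes y: "y \<in> U"
  shows "pd_t u y + u y * pd_r u y + k\<^sup>2 * \<rho> y * pd_r \<rho> y = 0"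
proof -
  obtain n where mn: "m = Suc n" using m by auto
  define r where "r = fst y"
  have r: "r > 0" using rpos[OF y] by (simp add: r_def)
  have p: "\<rho> y > 0" using ppos[OF y] .
  have f2: "(\<lambda>(r, t). r ^ m * \<rho> (r, t) * u (r, t)) = (\<lambda>y. fst y ^ m * \<rho> y * u y)" by (auto simp: fun_eq_iff)
  have f3: "(\<lambda>(r, t). r ^ m * \<rho> (r, t) * (u (r, t))\<^sup>2) = (\<lambda>y. fst y ^ m * \<rho> y * (u y)\<^sup>2)" by (auto simp: fun_eq_iff)
  note h2 = pd_of_HD[OF HD_mult[OF HD_mult[OF HD_pow[OF HD_fst] HDp[OF y]] HDu[OF y]], of m]
  note h3 = pd_of_HD[OF HD_mult[OF HD_mult[OF HD_pow[OF HD_fst] HDp[OF y]] HD_pow[OF HDu[OF y]]], of m 2]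
  have "HD (\<lambda>y. K * \<rho> y powr \<gamma>) y (K * (real 3 * \<rho> y ^ (3 - 1) * pd_r \<rho> y))
      (K * (real 3 * \<rho> y ^ (3 - 1) * pd_t \<rho> y))"
    by (rule HD_local[OF HD_cmult[OF HD_pow[OF HDp[OF y]]] U_open y]) (simp add: gam less_imp_le[OF ppos])
  note h4 = pd_of_HD[OF this]
  have "pd_t (\<lambda>y. fst y ^ m * \<rho> y * u y) y + pd_r (\<lambda>y. fst y ^ m * \<rho> y * (u y)\<^sup>2) y
     + r ^ m * pd_r (\<lambda>y. K * \<rho> y powr \<gamma>) y = 0"
    using momentum y f2 f3 by (auto simp: r_def)
  then have M: "r ^ m * (pd_t \<rho> y * u y + \<rho> y * pd_t u y) + r ^ m * (pd_r \<rho> y * (u y)\<^sup>2 + 2 * \<rho> y * u y * pd_r u y)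
     + real m * r ^ n * \<rho> y * (u y)\<^sup>2 + r ^ m * (3 * K * (\<rho> y)\<^sup>2 * pd_r \<rho> y) = 0"
    unfolding h2 h3 h4 by (simp add: mn r_def algebra_simps power2_eq_square)
  have E: "pd_t \<rho> y + u y * pd_r \<rho> y + \<rho> y * pd_r u y + real m * \<rho> y * u y / r = 0"
    using E1[OF y] by (simp add: r_def)
  have rn: "real m * r ^ n = real m * r ^ m / r" using r by (simp add: mn)
  have "r ^ m * \<rho> y * (pd_t u y + u y * pd_r u y + k\<^sup>2 * \<rho> y * pd_r \<rho> y)
     = (r ^ m * (pd_t \<rho> y * u y + \<rho> y * pd_t u y) + r ^ m * (pd_r \<rho> y * (u y)\<^sup>2 + 2 * \<rho> y * u y * pd_r u y)
     + real m * r ^ n * \<rho> y * (u y)\<^sup>2 + r ^ m * (3 * K * (\<rho> y)\<^sup>2 * pd_r \<rho> y))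
     - r ^ m * u y * (pd_t \<rho> y + u y * pd_r \<rho> y + \<rho> y * pd_r u y + real m * \<rho> y * u y / r)"
    unfolding rn k2 using r by (simp add: field_simps power2_eq_square)
  also have "\<dots> = 0" using M E by simp
  finally show ?thesis using r p by simp
qed


lemma E1r: assumes x: "x \<in> U"
  shows "pd_r (pd_t \<rho>) x + 2 * pd_r u x * pd_r \<rho> x + u x * pd_r (pd_r \<rho>) x + \<rho> x * pd_r (pd_r u) x
    + real m * (pd_r \<rho> x * u x + \<rho> x * pd_r u x) / fst x - real m * \<rho> x * u x / (fst x)\<^sup>2 = 0"
proof -
  have fx: "fst x \<noteq> 0" using rpos[OF x] by simp
  note hF = HD_add[OF HD_add[OF HD_add[OF HDpt[OF x] HD_mult[OF HDu[OF x] HDpr[OF x]]] HD_mult[OF HDp[OF x] HDur[OF x]]]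
     HD_div[OF HD_mult[OF HD_mult[OF HD_const[of "real m"] HDp[OF x]] HDu[OF x]] HD_fst fx]]
  note z = HD_zero(1)[OF hF U_open x E1]
  show ?thesis using z fx by (simp add: field_simps power2_eq_square)
qed

lemma E2r: assumes x: "x \<in> U"
  shows "pd_r (pd_t u) x + (pd_r u x)\<^sup>2 + u x * pd_r (pd_r u) x
    + k\<^sup>2 * ((pd_r \<rho> x)\<^sup>2 + \<rho> x * pd_r (pd_r \<rho>) x) = 0"
proof -
  note hF = HD_add[OF HD_add[OF HDut[OF x] HD_mult[OF HDu[OF x] HDur[OF x]]]
     HD_mult[OF HD_mult[OF HD_const[of "k\<^sup>2"] HDp[OF x]] HDpr[OF x]]]
  note z = HD_zero(1)[OF hF U_open x E2]
  show ?thesis using z by (simp add: field_simps power2_eq_square)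
qed

lemma g2: "2 / (\<gamma> - 1) = (1::real)" using gam by simp

definition AA where "AA y = pd_r u y + k * pd_r \<rho> y + real m / fst y * (k * \<rho> y * u y / (u y + k * \<rho> y))"
definition BB where "BB y = pd_r u y - k * pd_r \<rho> y - real m / fst y * (k * \<rho> y * u y / (u y - k * \<rho> y))"

lemma alpha_U: assumes y: "y \<in> U" shows "alpha m K \<gamma> \<rho> u y = AA y"
  unfolding alpha_def AA_def g2 pd_of_HD(1)[OF HDh[OF y]] hh_U[OF y] c2_U[OF y] by simp
lemma beta_U: assumes y: "y \<in> U" shows "beta m K \<gamma> \<rho> u y = BB y"
  unfolding beta_def BB_def g2 pd_of_HD(1)[OF HDh[OF y]] hh_U[OF y] c1_U[OF y] by simp

lemma HD_eq: "HD f x p q \<Longrightarrow> p = p' \<Longrightarrow> q = q' \<Longrightarrow> HD f x p' q'" by simp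

lemma Es_k: assumes x: "x \<in> U"
  shows "k * pd_t \<rho> x + u x * (k * pd_r \<rho> x) + k * \<rho> x * pd_r u x + real m * (k * \<rho> x) * u x / fst x = 0"
    "pd_t u x + u x * pd_r u x + k * \<rho> x * (k * pd_r \<rho> x) = 0"
    "k * pd_r (pd_t \<rho>) x + 2 * pd_r u x * (k * pd_r \<rho> x) + u x * (k * pd_r (pd_r \<rho>) x)
      + k * \<rho> x * pd_r (pd_r u) x + real m * (k * pd_r \<rho> x * u x + k * \<rho> x * pd_r u x) / fst x
      - real m * (k * \<rho> x) * u x / (fst x)\<^sup>2 = 0"
    "pd_r (pd_t u) x + (pd_r u x)\<^sup>2 + u x * pd_r (pd_r u) x
      + ((k * pd_r \<rho> x)\<^sup>2 + k * \<rho> x * (k * pd_r (pd_r \<rho>) x)) = 0"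
proof -
  have r: "fst x \<noteq> 0" using rpos[OF x] by simp
  have "k * (pd_t \<rho> x + u x * pd_r \<rho> x + \<rho> x * pd_r u x + real m * \<rho> x * u x / fst x) = 0"
    using E1[OF x] by simp
  then show "k * pd_t \<rho> x + u x * (k * pd_r \<rho> x) + k * \<rho> x * pd_r u x + real m * (k * \<rho> x) * u x / fst x = 0"
    by (simp add: algebra_simps)
  show "pd_t u x + u x * pd_r u x + k * \<rho> x * (k * pd_r \<rho> x) = 0"
    using E2[OF x] by (simp add: algebra_simps power2_eq_square)
  have "k * (pd_r (pd_t \<rho>) x + 2 * pd_r u x * pd_r \<rho> x + u x * pd_r (pd_r \<rho>) x + \<rho> x * pd_r (pd_r u) x
    + real m * (pd_r \<rho> x * u x + \<rho> x * pd_r u x) / fst x - real m * \<rho> x * u x / (fst x)\<^sup>2) = 0"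
    using E1r[OF x] by simp
  then show "k * pd_r (pd_t \<rho>) x + 2 * pd_r u x * (k * pd_r \<rho> x) + u x * (k * pd_r (pd_r \<rho>) x)
      + k * \<rho> x * pd_r (pd_r u) x + real m * (k * pd_r \<rho> x * u x + k * \<rho> x * pd_r u x) / fst x
      - real m * (k * \<rho> x) * u x / (fst x)\<^sup>2 = 0"
    by (simp add: algebra_simps)
  show "pd_r (pd_t u) x + (pd_r u x)\<^sup>2 + u x * pd_r (pd_r u) x
      + ((k * pd_r \<rho> x)\<^sup>2 + k * \<rho> x * (k * pd_r (pd_r \<rho>) x)) = 0"
    using E2r[OF x] by (simp add: algebra_simps power2_eq_square)
qed

lemma alpha_ode: assumes x: "x \<in> U" and W: "u x + k * \<rho> x \<noteq> 0" and Z: "u x - k * \<rho> x \<noteq> 0"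
  shows "\<exists>Ar At. HD (alpha m K \<gamma> \<rho> u) x Ar At \<and> At + (u x + k * \<rho> x) * Ar =
     - (AA x)\<^sup>2 + 2 * (real m * (k * \<rho> x) * u x / fst x) / (u x + k * \<rho> x) * AA x
     + real m / (2 * fst x * (u x + k * \<rho> x)) * ((u x - k * \<rho> x)\<^sup>2 * BB x - (u x + k * \<rho> x)\<^sup>2 * AA x)"
proof -
  have fx: "fst x \<noteq> 0" using rpos[OF x] by simp
  note hA = HD_add[OF HD_add[OF HDur[OF x] HD_cmult[OF HDpr[OF x], of k]]
     HD_mult[OF HD_div[OF HD_const[of "real m"] HD_fst fx]
       HD_div[OF HD_mult[OF HD_cmult[OF HDp[OF x], of k] HDu[OF x]] HD_add[OF HDu[OF x] HD_cmult[OF HDp[OF x], of k]] W]]]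
  define r where "r = fst x"
  define H where "H = k * \<rho> x"
  define Hr where "Hr = k * pd_r \<rho> x"
  define Hrr where "Hrr = k * pd_r (pd_r \<rho>) x"
  define Ht where "Ht = k * pd_t \<rho> x"
  define Htr where "Htr = k * pd_r (pd_t \<rho>) x"
  have hA': "HD (\<lambda>y. pd_r u y + k * pd_r \<rho> y + real m / fst y * (k * \<rho> y * u y / (u y + k * \<rho> y))) x
     (pd_r (pd_r u) x + Hrr + real m / r * ((Hr * u x + H * pd_r u x) * (u x + H) - H * u x * (pd_r u x + Hr)) / (u x + H)\<^sup>2
        - real m / r\<^sup>2 * (H * u x / (u x + H)))
     (pd_r (pd_t u) x + Htr + real m / r * ((Ht * u x + H * pd_t u x) * (u x + H) - H * u x * (pd_t u x + Ht)) / (u x + H)\<^sup>2)"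
    by (rule HD_eq[OF hA]) (use fx W in \<open>simp_all add: r_def H_def Hr_def Hrr_def Ht_def Htr_def symu[OF x] symp[OF x] field_simps\<close>)
  have hA'': "HD (alpha m K \<gamma> \<rho> u) x
     (pd_r (pd_r u) x + Hrr + real m / r * ((Hr * u x + H * pd_r u x) * (u x + H) - H * u x * (pd_r u x + Hr)) / (u x + H)\<^sup>2
        - real m / r\<^sup>2 * (H * u x / (u x + H)))
     (pd_r (pd_t u) x + Htr + real m / r * ((Ht * u x + H * pd_t u x) * (u x + H) - H * u x * (pd_t u x + Ht)) / (u x + H)\<^sup>2)"
    by (rule HD_local[OF hA' U_open x]) (simp add: alpha_U AA_def)
  have r: "r > 0" using rpos[OF x] by (simp add: r_def)
  note Es = Es_k[OF x, folded r_def H_def Hr_def Hrr_def Ht_def Htr_def]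
  note alg = alg_alpha0[OF r, of "u x" H, OF W[folded H_def] Z[folded H_def] Es]
  show ?thesis
    apply (rule exI, rule exI, rule conjI[OF hA''])
    using alg by (simp add: AA_def BB_def H_def Hr_def r_def)
qed

lemma beta_ode: assumes x: "x \<in> U" and W: "u x + k * \<rho> x \<noteq> 0" and Z: "u x - k * \<rho> x \<noteq> 0"
  shows "\<exists>Br Bt. HD (beta m K \<gamma> \<rho> u) x Br Bt \<and> Bt + (u x - k * \<rho> x) * Br =
     - (BB x)\<^sup>2 - 2 * (real m * (k * \<rho> x) * u x / fst x) / (u x - k * \<rho> x) * BB x
     - real m / (2 * fst x * (u x - k * \<rho> x)) * ((u x - k * \<rho> x)\<^sup>2 * BB x - (u x + k * \<rho> x)\<^sup>2 * AA x)"
proof -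
  have fx: "fst x \<noteq> 0" using rpos[OF x] by simp
  note hB = HD_diff[OF HD_diff[OF HDur[OF x] HD_cmult[OF HDpr[OF x], of k]]
     HD_mult[OF HD_div[OF HD_const[of "real m"] HD_fst fx]
       HD_div[OF HD_mult[OF HD_cmult[OF HDp[OF x], of k] HDu[OF x]] HD_diff[OF HDu[OF x] HD_cmult[OF HDp[OF x], of k]] Z]]]
  define r where "r = fst x"
  define H where "H = k * \<rho> x"
  define Hr where "Hr = k * pd_r \<rho> x"
  define Hrr where "Hrr = k * pd_r (pd_r \<rho>) x"
  define Ht where "Ht = k * pd_t \<rho> x"
  define Htr where "Htr = k * pd_r (pd_t \<rho>) x"
  have hB': "HD (\<lambda>y. pd_r u y - k * pd_r \<rho> y - real m / fst y * (k * \<rho> y * u y / (u y - k * \<rho> y))) x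
     (pd_r (pd_r u) x - Hrr - real m / r * ((Hr * u x + H * pd_r u x) * (u x - H) - H * u x * (pd_r u x - Hr)) / (u x - H)\<^sup>2
        + real m / r\<^sup>2 * (H * u x / (u x - H)))
     (pd_r (pd_t u) x - Htr - real m / r * ((Ht * u x + H * pd_t u x) * (u x - H) - H * u x * (pd_t u x - Ht)) / (u x - H)\<^sup>2)"
    by (rule HD_eq[OF hB]) (use fx Z in \<open>simp_all add: r_def H_def Hr_def Hrr_def Ht_def Htr_def symu[OF x] symp[OF x] field_simps\<close>)
  have hB'': "HD (beta m K \<gamma> \<rho> u) x
     (pd_r (pd_r u) x - Hrr - real m / r * ((Hr * u x + H * pd_r u x) * (u x - H) - H * u x * (pd_r u x - Hr)) / (u x - H)\<^sup>2
        + real m / r\<^sup>2 * (H * u x / (u x - H)))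
     (pd_r (pd_t u) x - Htr - real m / r * ((Ht * u x + H * pd_t u x) * (u x - H) - H * u x * (pd_t u x - Ht)) / (u x - H)\<^sup>2)"
    by (rule HD_local[OF hB' U_open x]) (simp add: beta_U BB_def)
  have r: "r > 0" using rpos[OF x] by (simp add: r_def)
  note Es = Es_k[OF x, folded r_def H_def Hr_def Hrr_def Ht_def Htr_def]
  note alg = alg_beta0[OF r, of "u x" H, OF W[folded H_def] Z[folded H_def] Es]
  show ?thesis
    apply (rule exI, rule exI, rule conjI[OF hB''])
    using alg by (simp add: AA_def BB_def H_def Hr_def r_def)
qed

end

lemma first_bad:
  fixes f :: "real \<Rightarrow> real"
  assumes "continuous_on {0..t} f" "0 \<le> t" "f t \<le> 0"
  obtains s0 where "s0 \<in> {0..t}" "f s0 \<le> 0" "\<And>s. 0 \<le> s \<Longrightarrow> s < s0 \<Longrightarrow> f s > 0"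
proof -
  define S where "S = {s \<in> {0..t}. f s \<le> 0}"
  have cl: "closed S" unfolding S_def
    by (rule continuous_on_closed_Collect_le[OF assms(1) continuous_on_const]) simp
  have ne: "S \<noteq> {}" using assms by (auto simp: S_def)
  have bd: "bdd_below S" by (auto simp: S_def bdd_below_def)
  have inS: "Inf S \<in> S" by (rule closed_contains_Inf[OF ne bd cl])
  show ?thesis
  proof (rule that[of "Inf S"])
    show "Inf S \<in> {0..t}" "f (Inf S) \<le> 0" using inS by (auto simp: S_def)
    fix s assume s: "0 \<le> s" "s < Inf S"
    have "s \<le> t" using s inS by (auto simp: S_def)
    show "f s > 0"
    proof (rule ccontr)
      assume "\<not> f s > 0"
      then have "s \<in> S" using s \<open>s \<le> t\<close> by (auto simp: S_def)
      then have "Inf S \<le> s" using bd by (simp add: cInf_lower)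
      then show False using s by simp
    qed
  qed
qed

lemma first_bad2:
  fixes f :: "real \<Rightarrow> real"
  assumes "continuous_on {c..t} f" "c \<le> t" "f t \<le> 0"
  obtains s0 where "s0 \<in> {c..t}" "f s0 \<le> 0" "\<And>s. c \<le> s \<Longrightarrow> s < s0 \<Longrightarrow> f s > 0"
proof -
  define S where "S = {s \<in> {c..t}. f s \<le> 0}"
  have cl: "closed S" unfolding S_def
    by (rule continuous_on_closed_Collect_le[OF assms(1) continuous_on_const]) simp
  have ne: "S \<noteq> {}" using assms by (auto simp: S_def)
  have bd: "bdd_below S" by (auto simp: S_def bdd_below_def)
  have inS: "Inf S \<in> S" by (rule closed_contains_Inf[OF ne bd cl])
  show ?thesis
  proof (rule that[of "Inf S"])
    show "Inf S \<in> {c..t}" "f (Inf S) \<le> 0" using inS by (auto simp: S_def)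
    fix s assume s: "c \<le> s" "s < Inf S"
    have "s \<le> t" using s inS by (auto simp: S_def)
    show "f s > 0"
    proof (rule ccontr)
      assume "\<not> f s > 0"
      then have "s \<in> S" using s \<open>s \<le> t\<close> by (auto simp: S_def)
      then have "Inf S \<le> s" using bd by (simp add: cInf_lower)
      then show False using s by simp
    qed
  qed
qed

lemma cross_strict:
  fixes d D :: "real \<Rightarrow> real"
  assumes dd: "\<And>s. s \<in> {0..T} \<Longrightarrow> (d has_real_derivative D s) (at s within {0..T})"
    and cr: "\<And>s. s \<in> {0..T} \<Longrightarrow> d s = 0 \<Longrightarrow> D s > 0"
    and s: "0 \<le> xa" "xa \<le> xb" "xb \<le> T" "d xa > 0"
  shows "d xb > 0"
proof (rule ccontr)
  assume "\<not> d xb > 0"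
  then have d1: "d xb \<le> 0" by simp
  have cd: "continuous_on {xa..xb} d"
    using DERIV_continuous_on[of "{0..T}" d D] dd continuous_on_subset s by (metis atLeastatMost_subset_iff)
  obtain \<sigma> where sg: "\<sigma> \<in> {xa..xb}" "d \<sigma> \<le> 0" "\<And>s. xa \<le> s \<Longrightarrow> s < \<sigma> \<Longrightarrow> d s > 0"
    using first_bad2[OF cd s(2) d1] by blast
  have "\<sigma> \<noteq> xa" using sg s by auto
  then have sg0: "xa < \<sigma>" using sg by auto
  obtain c where c: "xa \<le> c" "c \<le> \<sigma>" "d c = 0"
    using IVT2'[of d \<sigma> 0 xa] sg s(4) continuous_on_subset[OF cd] by fastforce
  have "c = \<sigma>" using c sg(3)[of c] by fastforce
  then have d0: "d \<sigma> = 0" using c by simp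
  have sT: "\<sigma> \<in> {0..T}" using sg s by auto
  have "D \<sigma> > 0" using cr[OF sT d0] .
  then obtain e where e: "e > 0" "\<And>h. h > 0 \<Longrightarrow> \<sigma> - h \<in> {0..T} \<Longrightarrow> h < e \<Longrightarrow> d (\<sigma> - h) < d \<sigma>"
    using has_real_derivative_pos_inc_left[OF dd[OF sT]] by blast
  define h where "h = min e (\<sigma> - xa) / 2"
  have h: "h > 0" "h < e" "h \<le> \<sigma> - xa" using e sg0 by (auto simp: h_def)
  have "d (\<sigma> - h) < 0" using e(2)[OF h(1) _ h(2)] h sT s d0 by auto
  moreover have "d (\<sigma> - h) > 0" using sg(3)[of "\<sigma> - h"] h by auto
  ultimately show False by simp
qed

lemma cross:
  fixes d D :: "real \<Rightarrow> real"
  assumes dd: "\<And>s. s \<in> {0..T} \<Longrightarrow> (d has_real_derivative D s) (at s within {0..T})"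
    and cr: "\<And>s. s \<in> {0..T} \<Longrightarrow> d s = 0 \<Longrightarrow> D s > 0"
    and s: "0 \<le> xa" "xa < xb" "xb \<le> T" "d xa \<ge> 0"
  shows "d xb > 0"
proof (cases "d xa > 0")
  case True
  have "xa \<le> xb" using s(2) by simp
  then show ?thesis using cross_strict[OF dd cr s(1) _ s(3) True] by blast
next
  case False
  then have d0: "d xa = 0" using s(4) by simp
  have sT: "xa \<in> {0..T}" using s by simp
  obtain e where e: "e > 0" "\<And>h. h > 0 \<Longrightarrow> xa + h \<in> {0..T} \<Longrightarrow> h < e \<Longrightarrow> d xa < d (xa + h)"
    using has_real_derivative_pos_inc_right[OF dd[OF sT] cr[OF sT d0]] by blast
  define h where "h = min e (xb - xa) / 2"
  have h: "h > 0" "h < e" "h < xb - xa" using e(1) s(2) by (auto simp: h_def)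
  have hT: "xa + h \<in> {0..T}" using h s by simp
  have "d (xa + h) > 0" using e(2)[OF h(1) hT h(2)] d0 by simp
  moreover have "0 \<le> xa + h" "xa + h \<le> xb" using h s by linarith+
  ultimately show ?thesis using cross_strict[OF dd cr _ _ s(3)] by blast
qed

lemma pos_persist:
  fixes f f' p :: "real \<Rightarrow> real"
  assumes t: "0 \<le> t"
   and der: "\<And>s. s \<in> {0..t} \<Longrightarrow> (f has_real_derivative f' s) (at s within {0..t})"
   and cp: "continuous_on {0..t} p"
   and ineq: "\<And>s. 0 \<le> s \<Longrightarrow> s < t \<Longrightarrow> f s > 0 \<Longrightarrow> f' s \<ge> p s * f s"
   and f0: "f 0 > 0"
  shows "f t > 0"
proof (rule ccontr)
  assume "\<not> f t > 0"
  then have ft: "f t \<le> 0" by simp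
  have cf: "continuous_on {0..t} f" using der DERIV_continuous_on by blast
  obtain M where M: "\<And>s. s \<in> {0..t} \<Longrightarrow> \<bar>p s\<bar> \<le> M"
  proof -
    have "compact (p ` {0..t})" using cp compact_continuous_image by blast
    then obtain M where "\<forall>y\<in>p ` {0..t}. norm y \<le> M" using compact_imp_bounded bounded_iff by metis
    then show ?thesis using that[of M] by auto
  qed
  obtain s0 where s0: "s0 \<in> {0..t}" "f s0 \<le> 0" "\<And>s. 0 \<le> s \<Longrightarrow> s < s0 \<Longrightarrow> f s > 0"
    using first_bad[OF cf t ft] by blast
  have s0pos: "s0 > 0" using s0 f0 by (cases "s0 = 0") auto
  define g where "g s = f s * exp (M * s)" for s
  have cg: "continuous_on {0..s0} g" unfolding g_def
    by (intro continuous_intros continuous_on_subset[OF cf]) (use s0 in auto)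
  have dg: "(g has_real_derivative (f' z * exp (M * z) + f z * (exp (M * z) * M))) (at z)"
    if "0 < z" "z < s0" for z
  proof -
    have zi: "z \<in> interior {0..t}" using that s0 by auto
    have zt: "z \<in> {0..t}" using that s0 by auto
    have "(f has_real_derivative f' z) (at z within {0..t})" by (rule der[OF zt])
    then have "(f has_real_derivative f' z) (at z)" by (simp only: at_within_interior[OF zi])
    moreover have "((\<lambda>s. exp (M * s)) has_real_derivative exp (M * z) * M) (at z)"
      using DERIV_exp[of "M * z"] DERIV_cmult_Id[of M z] DERIV_chain2 by blast
    ultimately have "((\<lambda>s. f s * exp (M * s)) has_real_derivative f' z * exp (M * z) + exp (M * z) * M * f z) (at z)"
      by (rule DERIV_mult)
    then show ?thesis unfolding g_def by (rule DERIV_cong) (simp add: algebra_simps)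
  qed
  have "g differentiable (at x)" if "0 < x" "x < s0" for x
    using dg[OF that] real_differentiable_def by blast
  then obtain l z where lz: "0 < z" "z < s0" "DERIV g z :> l" "g s0 - g 0 = (s0 - 0) * l"
    using MVT[OF s0pos cg] by blast
  have l: "l = f' z * exp (M * z) + f z * (exp (M * z) * M)"
    using DERIV_unique[OF lz(3) dg[OF lz(1,2)]] .
  have fz: "f z > 0" using s0(3)[of z] lz by auto
  have "f' z \<ge> p z * f z" using ineq[of z] lz s0 fz by auto
  moreover have "p z * f z \<ge> - M * f z"
  proof -
    have "p z \<ge> - M" using M[of z] lz s0 by auto
    then show ?thesis using mult_right_mono[OF _ less_imp_le[OF fz]] by blast
  qed
  ultimately have "f' z + f z * M \<ge> 0" by (simp add: algebra_simps)
  moreover have "l = (f' z + f z * M) * exp (M * z)" unfolding l by (simp add: algebra_simps)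
  ultimately have "l \<ge> 0" by simp
  then have "g s0 \<ge> g 0" using lz(4) s0pos by (simp add: algebra_simps)
  moreover have "g 0 > 0" using f0 by (simp add: g_def)
  moreover have "g s0 \<le> 0" using s0(2) by (simp add: g_def mult_nonpos_nonneg)
  ultimately show False by simp
qed

lemma lipschitz_slice:
  fixes c cr :: "real \<times> real \<Rightarrow> real"
  assumes cder: "\<And>r. r \<in> {y1..y2} \<Longrightarrow> ((\<lambda>r. c (r, s)) has_real_derivative cr (r, s)) (at r)"
    and L: "\<And>r. r \<in> {y1..y2} \<Longrightarrow> \<bar>cr (r, s)\<bar> \<le> L"
    and y: "y1 \<le> y2"
  shows "\<bar>c (y2, s) - c (y1, s)\<bar> \<le> L * (y2 - y1)"
proof (cases "y1 = y2")
  case True then show ?thesis by simp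
next
  case False
  then have "y1 < y2" using y by simp
  from MVT2[OF this, of "\<lambda>r. c (r, s)" "\<lambda>r. cr (r, s)"] cder
  obtain z where z: "y1 < z" "z < y2" "c (y2, s) - c (y1, s) = (y2 - y1) * cr (z, s)" by auto
  have "\<bar>c (y2, s) - c (y1, s)\<bar> = (y2 - y1) * \<bar>cr (z, s)\<bar>" using z y by (simp add: abs_mult)
  also have "\<dots> \<le> (y2 - y1) * L" using L[of z] z y by (intro mult_left_mono) auto
  finally show ?thesis by (simp add: mult.commute)
qed

lemma flow_cont:
  fixes c cr :: "real \<times> real \<Rightarrow> real" and \<phi> :: "real \<Rightarrow> real \<Rightarrow> real"
  assumes U: "open U"
   and cder: "\<And>y. y \<in> U \<Longrightarrow> ((\<lambda>r. c (r, snd y)) has_real_derivative cr y) (at (fst y))"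
   and ccr: "continuous_on U cr"
   and dom: "\<And>r0 s. r0 \<in> A \<Longrightarrow> s \<in> {0..T} \<Longrightarrow> (\<phi> r0 s, s) \<in> U"
   and ode: "\<And>r0 s. r0 \<in> A \<Longrightarrow> s \<in> {0..T} \<Longrightarrow>
       (\<phi> r0 has_real_derivative c (\<phi> r0 s, s)) (at s within {0..T})"
   and init: "\<And>r0. r0 \<in> A \<Longrightarrow> \<phi> r0 0 = r0"
   and T: "0 \<le> T"
   and r0: "r0 \<in> A" and e: "\<epsilon> > 0"
  shows "\<exists>\<delta>>0. \<forall>r1\<in>A. \<bar>r1 - r0\<bar> < \<delta> \<longrightarrow> (\<forall>s\<in>{0..T}. \<bar>\<phi> r1 s - \<phi> r0 s\<bar> < \<epsilon>)"
proof -
  have cphi: "continuous_on {0..T} (\<phi> r1)" if "r1 \<in> A" for r1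
    by (rule DERIV_continuous_on[of "{0..T}" "\<phi> r1" "\<lambda>s. c (\<phi> r1 s, s)"]) (rule ode[OF that])
  define \<Gamma> where "\<Gamma> = (\<lambda>s. (\<phi> r0 s, s)) ` {0..T}"
  have cG: "compact \<Gamma>" unfolding \<Gamma>_def
    by (intro compact_continuous_image continuous_on_Pair cphi[OF r0] continuous_on_id) simp
  have GU: "\<Gamma> \<subseteq> U" using dom[OF r0] by (auto simp: \<Gamma>_def)
  obtain e1 where e1: "e1 > 0" "(\<Union>x\<in>\<Gamma>. cball x e1) \<subseteq> U"
    using compact_subset_open_imp_cball_epsilon_subset[OF cG U GU] by blast
  define \<delta>0 where "\<delta>0 = min e1 \<epsilon> / 2"
  have d0: "\<delta>0 > 0" "\<delta>0 \<le> e1" "\<delta>0 < \<epsilon>" using e1 e by (auto simp: \<delta>0_def)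
  define N where "N = (\<lambda>(s, v). (\<phi> r0 s + v, s)) ` ({0..T} \<times> {-\<delta>0..\<delta>0})"
  have NU: "N \<subseteq> U"
  proof
    fix y assume "y \<in> N"
    then obtain s v where sv: "s \<in> {0..T}" "v \<in> {-\<delta>0..\<delta>0}" "y = (\<phi> r0 s + v, s)" by (auto simp: N_def)
    have "(\<phi> r0 s, s) \<in> \<Gamma>" using sv by (auto simp: \<Gamma>_def)
    moreover have "dist (\<phi> r0 s, s) y \<le> e1" using sv d0 by (simp add: dist_Pair_Pair dist_real_def abs_le_iff)
    ultimately show "y \<in> U" using e1(2) mem_cball by blast
  qed
  have cN: "compact N" unfolding N_def
  proof (intro compact_continuous_image)
    show "continuous_on ({0..T} \<times> {-\<delta>0..\<delta>0}) (\<lambda>(s, v). (\<phi> r0 s + v, s))"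
      unfolding case_prod_unfold
      by (intro continuous_intros continuous_on_compose2[OF cphi[OF r0]]) auto
  qed (intro compact_Times compact_Icc)
  obtain L0 where L0: "\<And>y. y \<in> N \<Longrightarrow> \<bar>cr y\<bar> \<le> L0"
  proof -
    have "compact (cr ` N)" using cN continuous_on_subset[OF ccr NU] compact_continuous_image by blast
    then obtain M where "\<forall>y\<in>cr ` N. norm y \<le> M" using compact_imp_bounded bounded_iff by metis
    then show ?thesis using that[of M] by auto
  qed
  define L where "L = \<bar>L0\<bar> + 1"
  have Lpos: "L > 0" by (simp add: L_def)
  have LN: "\<bar>cr y\<bar> \<le> L" if "y \<in> N" for y using L0[OF that] by (simp add: L_def)
  have lip: "\<bar>c (y2, s) - c (y1, s)\<bar> \<le> L * \<bar>y2 - y1\<bar>"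
    if s: "s \<in> {0..T}" and y1: "\<bar>y1 - \<phi> r0 s\<bar> \<le> \<delta>0" and y2: "\<bar>y2 - \<phi> r0 s\<bar> \<le> \<delta>0" for s y1 y2
  proof -
    have inN: "(r, s) \<in> N" if "\<bar>r - \<phi> r0 s\<bar> \<le> \<delta>0" for r
    proof -
      have "(r, s) = (\<lambda>(s, v). (\<phi> r0 s + v, s)) (s, r - \<phi> r0 s)" by simp
      moreover have "(s, r - \<phi> r0 s) \<in> {0..T} \<times> {-\<delta>0..\<delta>0}" using s that by auto
      ultimately show ?thesis unfolding N_def by blast
    qed
    have gen: "\<bar>c (q2, s) - c (q1, s)\<bar> \<le> L * (q2 - q1)"
      if "q1 \<le> q2" "\<bar>q1 - \<phi> r0 s\<bar> \<le> \<delta>0" "\<bar>q2 - \<phi> r0 s\<bar> \<le> \<delta>0" for q1 q2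
    proof (rule lipschitz_slice[OF _ _ that(1)])
      fix r assume r: "r \<in> {q1..q2}"
      then have rN: "(r, s) \<in> N" using that by (intro inN) auto
      show "((\<lambda>r. c (r, s)) has_real_derivative cr (r, s)) (at r)" using cder[of "(r, s)"] rN NU by auto
      show "\<bar>cr (r, s)\<bar> \<le> L" using LN[OF rN] .
    qed
    show ?thesis
    proof (cases "y1 \<le> y2")
      case True then show ?thesis using gen[OF True y1 y2] by simp
    next
      case False then show ?thesis using gen[of y2 y1] y1 y2 by (simp add: abs_minus_commute)
    qed
  qed
  define \<delta> where "\<delta> = \<delta>0 * exp (- L * T) / 2"
  have dpos: "\<delta> > 0" using d0 by (simp add: \<delta>_def)
  show ?thesis
  proof (intro exI[of _ \<delta>] conjI dpos ballI impI)
    fix r1 s assume r1: "r1 \<in> A" "\<bar>r1 - r0\<bar> < \<delta>" and s: "s \<in> {0..T}"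
    define ee where "ee s = \<phi> r1 s - \<phi> r0 s" for s
    have ee0: "\<bar>ee 0\<bar> < \<delta>" using r1 init r0 by (simp add: ee_def)
    have dle: "\<delta> \<le> \<delta>0 / 2" using d0 Lpos T by (simp add: \<delta>_def)
    have main: "\<bar>ee t\<bar> < \<delta>0" if t: "t \<in> {0..T}" for t
    proof (rule ccontr)
      assume "\<not> \<bar>ee t\<bar> < \<delta>0"
      then have bad: "\<delta>0 - \<bar>ee t\<bar> \<le> 0" by simp
      have cee: "continuous_on {0..T} ee" unfolding ee_def by (intro continuous_intros cphi r1 r0)
      have cb: "continuous_on {0..t} (\<lambda>s. \<delta>0 - \<bar>ee s\<bar>)"
        by (intro continuous_intros continuous_on_subset[OF cee]) (use t in auto)
      obtain s0 where s0: "s0 \<in> {0..t}" "\<delta>0 - \<bar>ee s0\<bar> \<le> 0" "\<And>s. 0 \<le> s \<Longrightarrow> s < s0 \<Longrightarrow> \<delta>0 - \<bar>ee s\<bar> > 0"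
        using first_bad2[OF cb _ bad] t by auto
      have s0pos: "s0 > 0" using s0 ee0 dle by (cases "s0 = 0") auto
      define E where "E s = ee s * ee s * exp (- 2 * L * s)" for s
      have cE: "continuous_on {0..s0} E" unfolding E_def
        by (intro continuous_intros continuous_on_subset[OF cee]) (use s0 t in auto)
      have dE: "(E has_real_derivative (2 * ee z * (c (\<phi> r1 z, z) - c (\<phi> r0 z, z)) * exp (- 2 * L * z)
                 + ee z * ee z * (exp (- 2 * L * z) * (- 2 * L)))) (at z)"
        if z: "0 < z" "z < s0" for z
      proof -
        have zi: "z \<in> interior {0..T}" using z s0 t by auto
        have zT: "z \<in> {0..T}" using z s0 t by auto
        have "(\<phi> r1 has_real_derivative c (\<phi> r1 z, z)) (at z within {0..T})" by (rule ode[OF r1(1) zT])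
        then have d1: "(\<phi> r1 has_real_derivative c (\<phi> r1 z, z)) (at z)" by (simp only: at_within_interior[OF zi])
        have "(\<phi> r0 has_real_derivative c (\<phi> r0 z, z)) (at z within {0..T})" by (rule ode[OF r0 zT])
        then have d2: "(\<phi> r0 has_real_derivative c (\<phi> r0 z, z)) (at z)" by (simp only: at_within_interior[OF zi])
        have dee: "(ee has_real_derivative (c (\<phi> r1 z, z) - c (\<phi> r0 z, z))) (at z)"
          unfolding ee_def by (rule DERIV_diff[OF d1 d2])
        have dsq: "((\<lambda>s. ee s * ee s) has_real_derivative (2 * ee z * (c (\<phi> r1 z, z) - c (\<phi> r0 z, z)))) (at z)"
          by (rule DERIV_cong[OF DERIV_mult[OF dee dee]]) (simp add: algebra_simps)
        have dexp: "((\<lambda>s. exp (- 2 * L * s)) has_real_derivative exp (- 2 * L * z) * (- 2 * L)) (at z)"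
          using DERIV_exp[of "- 2 * L * z"] DERIV_cmult_Id[of "- 2 * L" z] DERIV_chain2 by blast
        show ?thesis unfolding E_def
          by (rule DERIV_cong[OF DERIV_mult[OF dsq dexp]]) (simp add: algebra_simps)
      qed
      have "E differentiable (at x)" if "0 < x" "x < s0" for x
        using dE[OF that] real_differentiable_def by blast
      then obtain l z where lz: "0 < z" "z < s0" "DERIV E z :> l" "E s0 - E 0 = (s0 - 0) * l"
        using MVT[OF s0pos cE] by blast
      have l: "l = 2 * ee z * (c (\<phi> r1 z, z) - c (\<phi> r0 z, z)) * exp (- 2 * L * z)
                 + ee z * ee z * (exp (- 2 * L * z) * (- 2 * L))"
        using DERIV_unique[OF lz(3) dE[OF lz(1,2)]] .
      have zT: "z \<in> {0..T}" using lz s0 t by auto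
      have ez: "\<bar>ee z\<bar> \<le> \<delta>0" using s0(3)[of z] lz by auto
      have lipz: "\<bar>c (\<phi> r1 z, z) - c (\<phi> r0 z, z)\<bar> \<le> L * \<bar>ee z\<bar>"
        using lip[OF zT, of "\<phi> r0 z" "\<phi> r1 z"] ez d0 by (simp add: ee_def)
      have "ee z * (c (\<phi> r1 z, z) - c (\<phi> r0 z, z)) \<le> \<bar>ee z\<bar> * \<bar>c (\<phi> r1 z, z) - c (\<phi> r0 z, z)\<bar>"
        using abs_ge_self[of "ee z * (c (\<phi> r1 z, z) - c (\<phi> r0 z, z))"] by (simp add: abs_mult)
      also have "\<dots> \<le> \<bar>ee z\<bar> * (L * \<bar>ee z\<bar>)" by (rule mult_left_mono[OF lipz abs_ge_zero])
      also have "\<dots> = L * (ee z)\<^sup>2" by (simp add: power2_eq_square)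
      finally have key: "ee z * (c (\<phi> r1 z, z) - c (\<phi> r0 z, z)) \<le> L * (ee z)\<^sup>2" .
      have "l = 2 * exp (- 2 * L * z) * (ee z * (c (\<phi> r1 z, z) - c (\<phi> r0 z, z)) - L * (ee z)\<^sup>2)"
        unfolding l by (simp add: algebra_simps power2_eq_square)
      also have "\<dots> \<le> 0" using key by (intro mult_nonneg_nonpos) auto
      finally have "l \<le> 0" .
      then have "s0 * l \<le> 0" using s0pos by (simp add: mult_nonneg_nonpos)
      then have "E s0 \<le> E 0" using lz(4) by simp
      then have "(ee s0)\<^sup>2 * exp (- 2 * L * s0) \<le> (ee 0)\<^sup>2" by (simp add: E_def power2_eq_square)
      then have m1: "(ee s0)\<^sup>2 * exp (- 2 * L * s0) * exp (2 * L * s0) \<le> (ee 0)\<^sup>2 * exp (2 * L * s0)"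
        by (intro mult_right_mono) auto
      have ea: "exp (- 2 * L * s0) * exp (2 * L * s0) = 1" by (simp flip: exp_add)
      have eq: "(ee s0)\<^sup>2 = (ee s0)\<^sup>2 * exp (- 2 * L * s0) * exp (2 * L * s0)"
        using ea by (metis mult.assoc mult_1_right)
      have "(ee s0)\<^sup>2 \<le> (ee 0)\<^sup>2 * exp (2 * L * s0)" by (rule ord_eq_le_trans[OF eq m1])
      also have "\<dots> \<le> (ee 0)\<^sup>2 * exp (2 * L * T)"
      proof (rule mult_left_mono)
        show "exp (2 * L * s0) \<le> exp (2 * L * T)" using s0 t Lpos by simp
      qed simp
      also have "\<dots> < (\<delta>0 / 2 * exp (- L * T))\<^sup>2 * exp (2 * L * T)"
      proof -
        have "\<bar>ee 0\<bar> < \<delta>0 / 2 * exp (- L * T)" using ee0 by (simp add: \<delta>_def)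
        then have "\<bar>ee 0\<bar>\<^sup>2 < (\<delta>0 / 2 * exp (- L * T))\<^sup>2"
          by (rule power_strict_mono) auto
        then have "(ee 0)\<^sup>2 < (\<delta>0 / 2 * exp (- L * T))\<^sup>2" by simp
        then show ?thesis by (rule mult_strict_right_mono) simp
      qed
      also have "\<dots> = (\<delta>0 / 2)\<^sup>2"
      proof -
        have e1: "exp (- L * T) * exp (- L * T) * exp (2 * L * T) = 1" by (simp flip: exp_add)
        have "(\<delta>0 / 2 * exp (- L * T))\<^sup>2 * exp (2 * L * T)
              = (\<delta>0 / 2)\<^sup>2 * (exp (- L * T) * exp (- L * T) * exp (2 * L * T))"
          by (simp add: power2_eq_square algebra_simps)
        then show ?thesis using e1 by simp
      qed
      finally have "(ee s0)\<^sup>2 < (\<delta>0 / 2)\<^sup>2" .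
      moreover have "\<delta>0 \<le> \<bar>ee s0\<bar>" using s0(2) by simp
      then have "\<delta>0 / 2 \<le> \<bar>ee s0\<bar>" using d0 by simp
      then have "(\<delta>0 / 2)\<^sup>2 \<le> \<bar>ee s0\<bar>\<^sup>2" using d0 by (intro power_mono) auto
      then have "(\<delta>0 / 2)\<^sup>2 \<le> (ee s0)\<^sup>2" by simp
      ultimately show False by simp
    qed
    show "\<bar>\<phi> r1 s - \<phi> r0 s\<bar> < \<epsilon>" using main[OF s] d0 by (simp add: ee_def)
  qed
qed

context eul begin

abbreviation DD where "DD \<equiv> dom_infl \<xi> \<psi> {a..b} T"

lemma DD_iff: "(r, t) \<in> DD \<longleftrightarrow> t \<in> {0..T} \<and> (\<exists>r1\<in>{a..b}. \<exists>r2\<in>{a..b}. \<psi> r1 t = r \<and> \<xi> r2 t = r)"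
  by (simp add: dom_infl_def)

lemma DD_U: "x \<in> DD \<Longrightarrow> x \<in> U"
  using psi_dom by (auto simp: dom_infl_def)

lemma c12_U: "y \<in> U \<Longrightarrow> c1 K \<gamma> \<rho> u y < c2 K \<gamma> \<rho> u y"
  using ppos[of y] k_pos by (simp add: c1_U c2_U)

lemma HDc2: "y \<in> U \<Longrightarrow> HD (c2 K \<gamma> \<rho> u) y (pd_r u y + k * pd_r \<rho> y) (pd_t u y + k * pd_t \<rho> y)"
  by (rule HD_local[OF HD_add[OF HDu HD_cmult[OF HDp]] U_open]) (auto simp: c2_U)
lemma HDc1: "y \<in> U \<Longrightarrow> HD (c1 K \<gamma> \<rho> u) y (pd_r u y - k * pd_r \<rho> y) (pd_t u y - k * pd_t \<rho> y)"
  by (rule HD_local[OF HD_diff[OF HDu HD_cmult[OF HDp]] U_open]) (auto simp: c1_U)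

lemma psi_cont_r: assumes r0: "r0 \<in> {a..b}" and e: "\<epsilon> > 0"
  shows "\<exists>\<delta>>0. \<forall>r1\<in>{a..b}. \<bar>r1 - r0\<bar> < \<delta> \<longrightarrow> (\<forall>s\<in>{0..T}. \<bar>\<psi> r1 s - \<psi> r0 s\<bar> < \<epsilon>)"
proof (rule flow_cont[OF U_open _ _ _ _ _ _ r0 e, where c = "c2 K \<gamma> \<rho> u" and cr = "\<lambda>y. pd_r u y + k * pd_r \<rho> y"])
  show "((\<lambda>r. c2 K \<gamma> \<rho> u (r, snd y)) has_real_derivative pd_r u y + k * pd_r \<rho> y) (at (fst y))" if "y \<in> U" for y
  proof -
    obtain r t where y: "y = (r, t)" by (cases y)
    show ?thesis using HD_horiz[OF HDc2[OF that[unfolded y]]] y by simp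
  qed
  show "continuous_on U (\<lambda>y. pd_r u y + k * pd_r \<rho> y)" by (intro continuous_intros su sp)
qed (use psi_dom psi_ode psi_init T in auto)

lemma xi_cont_r: assumes r0: "r0 \<in> {a..b}" and e: "\<epsilon> > 0"
  shows "\<exists>\<delta>>0. \<forall>r1\<in>{a..b}. \<bar>r1 - r0\<bar> < \<delta> \<longrightarrow> (\<forall>s\<in>{0..T}. \<bar>\<xi> r1 s - \<xi> r0 s\<bar> < \<epsilon>)"
proof (rule flow_cont[OF U_open _ _ _ _ _ _ r0 e, where c = "c1 K \<gamma> \<rho> u" and cr = "\<lambda>y. pd_r u y - k * pd_r \<rho> y"])
  show "((\<lambda>r. c1 K \<gamma> \<rho> u (r, snd y)) has_real_derivative pd_r u y - k * pd_r \<rho> y) (at (fst y))" if "y \<in> U" for y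
  proof -
    obtain r t where y: "y = (r, t)" by (cases y)
    show ?thesis using HD_horiz[OF HDc1[OF that[unfolded y]]] y by simp
  qed
  show "continuous_on U (\<lambda>y. pd_r u y - k * pd_r \<rho> y)" by (intro continuous_intros su sp)
qed (use xi_dom xi_ode xi_init T in auto)

end

context eul begin

lemma psi_cont_s: "r0 \<in> {a..b} \<Longrightarrow> continuous_on {0..T} (\<psi> r0)"
  by (rule DERIV_continuous_on[of "{0..T}" "\<psi> r0" "\<lambda>s. c2 K \<gamma> \<rho> u (\<psi> r0 s, s)"]) (use psi_ode in auto)
lemma xi_cont_s: "r0 \<in> {a..b} \<Longrightarrow> continuous_on {0..T} (\<xi> r0)"
  by (rule DERIV_continuous_on[of "{0..T}" "\<xi> r0" "\<lambda>s. c1 K \<gamma> \<rho> u (\<xi> r0 s, s)"]) (use xi_ode in auto)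

lemma joint_cont:
  fixes \<phi> :: "real \<Rightarrow> real \<Rightarrow> real"
  assumes cr: "\<And>r0 e. r0 \<in> {a..b} \<Longrightarrow> e > 0 \<Longrightarrow>
      \<exists>\<delta>>0. \<forall>r1\<in>{a..b}. \<bar>r1 - r0\<bar> < \<delta> \<longrightarrow> (\<forall>s\<in>{0..T}. \<bar>\<phi> r1 s - \<phi> r0 s\<bar> < e)"
    and cs: "\<And>r0. r0 \<in> {a..b} \<Longrightarrow> continuous_on {0..T} (\<phi> r0)"
  shows "continuous_on ({a..b} \<times> {0..T}) (\<lambda>p. \<phi> (fst p) (snd p))"
  unfolding continuous_on_iff
proof (intro ballI allI impI)
  fix p e assume p: "p \<in> {a..b} \<times> {0..T}" and e: "(e::real) > 0"
  obtain r0 s0 where p0: "p = (r0, s0)" by (cases p)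
  have r0: "r0 \<in> {a..b}" and s0: "s0 \<in> {0..T}" using p p0 by auto
  obtain d1 where d1: "d1 > 0" "\<forall>r1\<in>{a..b}. \<bar>r1 - r0\<bar> < d1 \<longrightarrow> (\<forall>s\<in>{0..T}. \<bar>\<phi> r1 s - \<phi> r0 s\<bar> < e / 2)"
    using cr[OF r0, of "e / 2"] e by auto
  obtain d2 where d2: "d2 > 0" "\<forall>s\<in>{0..T}. dist s s0 < d2 \<longrightarrow> dist (\<phi> r0 s) (\<phi> r0 s0) < e / 2"
    using cs[OF r0] s0 e unfolding continuous_on_iff by (meson half_gt_zero)
  show "\<exists>d>0. \<forall>x'\<in>{a..b} \<times> {0..T}. dist x' p < d \<longrightarrow> dist (\<phi> (fst x') (snd x')) (\<phi> (fst p) (snd p)) < e"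
  proof (intro exI[of _ "min d1 d2"] conjI ballI impI)
    show "min d1 d2 > 0" using d1 d2 by simp
    fix x' assume x': "x' \<in> {a..b} \<times> {0..T}" and dx: "dist x' p < min d1 d2"
    obtain r1 s1 where x1: "x' = (r1, s1)" by (cases x')
    have r1: "r1 \<in> {a..b}" and s1: "s1 \<in> {0..T}" using x' x1 by auto
    have "dist r1 r0 \<le> dist x' p" using dist_fst_le[of x' p] by (simp add: x1 p0)
    then have h1: "\<bar>r1 - r0\<bar> < d1" using dx by (simp add: dist_real_def)
    have "dist s1 s0 \<le> dist x' p" using dist_snd_le[of x' p] by (simp add: x1 p0)
    then have h2: "dist s1 s0 < d2" using dx by simp
    have "\<bar>\<phi> r1 s1 - \<phi> r0 s1\<bar> < e / 2" using d1(2) r1 h1 s1 by auto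
    moreover have "\<bar>\<phi> r0 s1 - \<phi> r0 s0\<bar> < e / 2" using d2(2) s1 h2 by (auto simp: dist_real_def)
    moreover have "\<bar>\<phi> r1 s1 - \<phi> r0 s0\<bar> \<le> \<bar>\<phi> r1 s1 - \<phi> r0 s1\<bar> + \<bar>\<phi> r0 s1 - \<phi> r0 s0\<bar>"
      by (rule abs_triangle_ineq[of "\<phi> r1 s1 - \<phi> r0 s1" "\<phi> r0 s1 - \<phi> r0 s0", simplified])
    ultimately show "dist (\<phi> (fst x') (snd x')) (\<phi> (fst p) (snd p)) < e"
      by (simp add: x1 p0 dist_real_def)
  qed
qed

lemma psi_joint: "continuous_on ({a..b} \<times> {0..T}) (\<lambda>p. \<psi> (fst p) (snd p))"
  by (rule joint_cont[OF psi_cont_r psi_cont_s])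
lemma xi_joint: "continuous_on ({a..b} \<times> {0..T}) (\<lambda>p. \<xi> (fst p) (snd p))"
  by (rule joint_cont[OF xi_cont_r xi_cont_s])

lemma psi_cont_fix: "s \<in> {0..T} \<Longrightarrow> continuous_on {a..b} (\<lambda>r. \<psi> r s)"
  by (rule continuous_on_compose2[OF psi_joint, of _ "\<lambda>r. (r, s)", simplified])
     (auto intro!: continuous_intros)
lemma xi_cont_fix: "s \<in> {0..T} \<Longrightarrow> continuous_on {a..b} (\<lambda>r. \<xi> r s)"
  by (rule continuous_on_compose2[OF xi_joint, of _ "\<lambda>r. (r, s)", simplified])
     (auto intro!: continuous_intros)

lemma DD_compact: "compact DD"
proof -
  define B where "B = {a..b} \<times> ({a..b} \<times> {0..T})"
  define Q where "Q = {p \<in> B. \<psi> (fst p) (snd (snd p)) - \<xi> (fst (snd p)) (snd (snd p)) = 0}"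
  have cB: "compact B" unfolding B_def by (intro compact_Times compact_Icc)
  have "continuous_on B (\<lambda>x. (\<lambda>p. \<psi> (fst p) (snd p)) ((\<lambda>p. (fst p, snd (snd p))) x))"
    by (rule continuous_on_compose2[OF psi_joint]) (auto simp: B_def intro!: continuous_intros)
  then have c1: "continuous_on B (\<lambda>p. \<psi> (fst p) (snd (snd p)))" by simp
  have "continuous_on B (\<lambda>x. (\<lambda>p. \<xi> (fst p) (snd p)) ((\<lambda>p. (fst (snd p), snd (snd p))) x))"
    by (rule continuous_on_compose2[OF xi_joint]) (auto simp: B_def intro!: continuous_intros)
  then have c2: "continuous_on B (\<lambda>p. \<xi> (fst (snd p)) (snd (snd p)))" by simp
  have "closed Q" unfolding Q_def
    by (rule continuous_closed_preimage_constant[OF continuous_on_diff[OF c1 c2] compact_imp_closed[OF cB]])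
  then have cQ: "compact Q" using compact_Int_closed[OF cB] by (metis (no_types, lifting) Q_def inf.absorb_iff2 mem_Collect_eq subsetI)
  have cm: "continuous_on Q (\<lambda>p. (\<psi> (fst p) (snd (snd p)), snd (snd p)))"
    by (intro continuous_intros continuous_on_subset[OF c1]) (auto simp: Q_def)
  have "DD = (\<lambda>p. (\<psi> (fst p) (snd (snd p)), snd (snd p))) ` Q"
  proof (rule set_eqI)
    fix x :: "real \<times> real"
    obtain r t where x: "x = (r, t)" by (cases x)
    show "x \<in> DD \<longleftrightarrow> x \<in> (\<lambda>p. (\<psi> (fst p) (snd (snd p)), snd (snd p))) ` Q"
    proof
      assume "x \<in> DD"
      then obtain r1 r2 where "t \<in> {0..T}" "r1 \<in> {a..b}" "r2 \<in> {a..b}" "\<psi> r1 t = r" "\<xi> r2 t = r"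
        using DD_iff x by auto
      then have "(r1, r2, t) \<in> Q" "x = (\<lambda>p. (\<psi> (fst p) (snd (snd p)), snd (snd p))) (r1, r2, t)"
        by (auto simp: Q_def B_def x)
      then show "x \<in> (\<lambda>p. (\<psi> (fst p) (snd (snd p)), snd (snd p))) ` Q" by blast
    next
      assume "x \<in> (\<lambda>p. (\<psi> (fst p) (snd (snd p)), snd (snd p))) ` Q"
      then obtain r1 r2 s where "(r1, r2, s) \<in> Q" "x = (\<psi> r1 s, s)" by auto
      then show "x \<in> DD" by (auto simp: Q_def B_def dom_infl_def)
    qed
  qed
  then show ?thesis using compact_continuous_image[OF cm cQ] by simp
qed

lemma cross_psi_xi:
  assumes r: "r1 \<in> {a..b}" "r2 \<in> {a..b}" and s: "0 \<le> x1" "x1 < x2" "x2 \<le> T"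
    and ge: "\<psi> r1 x1 \<ge> \<xi> r2 x1"
  shows "\<psi> r1 x2 > \<xi> r2 x2"
proof -
  have "(\<lambda>s. \<psi> r1 s - \<xi> r2 s) x2 > 0"
  proof (rule cross[where d = "\<lambda>s. \<psi> r1 s - \<xi> r2 s"
        and D = "\<lambda>s. c2 K \<gamma> \<rho> u (\<psi> r1 s, s) - c1 K \<gamma> \<rho> u (\<xi> r2 s, s)"])
    show "((\<lambda>s. \<psi> r1 s - \<xi> r2 s) has_real_derivative
        c2 K \<gamma> \<rho> u (\<psi> r1 s, s) - c1 K \<gamma> \<rho> u (\<xi> r2 s, s)) (at s within {0..T})" if "s \<in> {0..T}" for s
      using psi_ode r that xi_ode by (intro DERIV_diff) auto
    show "0 < c2 K \<gamma> \<rho> u (\<psi> r1 s, s) - c1 K \<gamma> \<rho> u (\<xi> r2 s, s)"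
      if "s \<in> {0..T}" "\<psi> r1 s - \<xi> r2 s = 0" for s
      using c12_U[of "(\<psi> r1 s, s)"] psi_dom xi_dom r that by auto
  qed (use s ge in auto)
  then show ?thesis by simp
qed

lemma DD_back:
  assumes r: "r1 \<in> {a..b}" "r2 \<in> {a..b}" and t: "t \<in> {0..T}" and eq: "\<psi> r1 t = \<xi> r2 t"
    and s: "s \<in> {0..t}"
  shows "(\<psi> r1 s, s) \<in> DD" "(\<xi> r2 s, s) \<in> DD"
proof -
  have sT: "s \<in> {0..T}" using s t by auto
  have i: "\<psi> r1 s \<le> \<xi> r2 s"
  proof (rule ccontr)
    assume "\<not> ?thesis"
    then have "s < t" using s eq by (cases "s = t") auto
    then have "\<psi> r1 t > \<xi> r2 t" using cross_psi_xi[OF r, of s t] s t \<open>\<not> _\<close> by auto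
    then show False using eq by simp
  qed
  have ii: "\<xi> a s \<le> \<psi> r1 s"
  proof (cases "s = 0")
    case True then show ?thesis using xi_init psi_init r ab by auto
  next
    case False
    then show ?thesis using cross_psi_xi[OF r(1), of a 0 s] psi_init xi_init r ab s t by auto
  qed
  have iii: "\<xi> r2 s \<le> \<psi> b s"
  proof (cases "s = 0")
    case True then show ?thesis using xi_init psi_init r ab by auto
  next
    case False
    then show ?thesis using cross_psi_xi[of b r2 0 s] psi_init xi_init r ab s t by auto
  qed
  obtain x where x: "a \<le> x" "x \<le> r2" "\<xi> x s = \<psi> r1 s"
    using IVT'[of "\<lambda>r. \<xi> r s" a "\<psi> r1 s" r2] ii i r
      continuous_on_subset[OF xi_cont_fix[OF sT], of "{a..r2}"] by auto
  show "(\<psi> r1 s, s) \<in> DD" unfolding DD_iff using x r sT by auto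
  obtain y where y: "r1 \<le> y" "y \<le> b" "\<psi> y s = \<xi> r2 s"
    using IVT'[of "\<lambda>r. \<psi> r s" r1 "\<xi> r2 s" b] iii i r
      continuous_on_subset[OF psi_cont_fix[OF sT], of "{r1..b}"] by auto
  show "(\<xi> r2 s, s) \<in> DD" unfolding DD_iff using y r sT by (metis atLeastAtMost_iff order_trans)
qed

end

lemma alg_fin_a: fixes A B g w z r m :: real assumes "w \<noteq> 0" "r \<noteq> 0"
  shows "- A\<^sup>2 + 2 * g / w * A + m / (2 * r * w) * (z\<^sup>2 * B - w\<^sup>2 * A)
     = A * (- A + 2 * g / w - m * w / (2 * r)) + m * z\<^sup>2 * B / (2 * r * w)"
  using assms by (simp add: field_simps power2_eq_square)

lemma alg_fin_b: fixes A B g w z r m :: real assumes "z \<noteq> 0" "r \<noteq> 0"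
  shows "- B\<^sup>2 - 2 * g / z * B - m / (2 * r * z) * (z\<^sup>2 * B - w\<^sup>2 * A)
     = B * (- B - 2 * g / z - m * z / (2 * r)) + m * w\<^sup>2 * A / (2 * r * z)"
  using assms by (simp add: field_simps power2_eq_square)

context eul begin

definition "WW y = u y + k * \<rho> y"
definition "ZZ y = u y - k * \<rho> y"
definition "GG y = real m * (k * \<rho> y) * u y / fst y"
definition "Pa y = - AA y + 2 * GG y / WW y - real m * WW y / (2 * fst y)"
definition "Qa y = real m * (ZZ y)\<^sup>2 * BB y / (2 * fst y * WW y)"
definition "Pb y = - BB y - 2 * GG y / ZZ y - real m * ZZ y / (2 * fst y)"
definition "Qb y = real m * (WW y)\<^sup>2 * AA y / (2 * fst y * ZZ y)"

lemma WZ_neg: assumes "x \<in> DD" shows "WW x < 0" "ZZ x < 0"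
proof -
  have "c1 K \<gamma> \<rho> u x < c2 K \<gamma> \<rho> u x \<and> c2 K \<gamma> \<rho> u x < 0" using supersonic assms by blast
  then show "WW x < 0" "ZZ x < 0" using DD_U[OF assms] by (auto simp: WW_def ZZ_def c1_U c2_U)
qed

lemma alpha_curve:
  assumes r1: "r1 \<in> {a..b}" and s: "s \<in> {0..T}" and xD: "(\<psi> r1 s, s) \<in> DD"
  shows "((\<lambda>s. alpha m K \<gamma> \<rho> u (\<psi> r1 s, s)) has_real_derivative
          (AA (\<psi> r1 s, s) * Pa (\<psi> r1 s, s) + Qa (\<psi> r1 s, s))) (at s within {0..T})"
proof -
  define x where "x = (\<psi> r1 s, s)"
  have xU: "x \<in> U" using DD_U xD by (simp add: x_def)
  have W: "WW x < 0" "ZZ x < 0" using WZ_neg xD by (auto simp: x_def)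
  have r: "fst x > 0" using rpos[OF xU] .
  obtain Ar At where hd: "HD (alpha m K \<gamma> \<rho> u) x Ar At" and id: "At + (u x + k * \<rho> x) * Ar =
     - (AA x)\<^sup>2 + 2 * (real m * (k * \<rho> x) * u x / fst x) / (u x + k * \<rho> x) * AA x
     + real m / (2 * fst x * (u x + k * \<rho> x)) * ((u x - k * \<rho> x)\<^sup>2 * BB x - (u x + k * \<rho> x)\<^sup>2 * AA x)"
    using alpha_ode[OF xU] W by (auto simp: WW_def ZZ_def)
  have "((\<lambda>s. alpha m K \<gamma> \<rho> u (\<psi> r1 s, s)) has_real_derivative (Ar * c2 K \<gamma> \<rho> u x + At)) (at s within {0..T})"
  proof -
    have pd: "(\<psi> r1 has_real_derivative c2 K \<gamma> \<rho> u (\<psi> r1 s, s)) (at s within {0..T})"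
      using psi_ode r1 s by auto
    show ?thesis using HD_curve[OF pd hd[unfolded x_def]] by (simp add: x_def)
  qed
  moreover have "Ar * c2 K \<gamma> \<rho> u x + At = AA x * Pa x + Qa x"
  proof -
    have "Ar * c2 K \<gamma> \<rho> u x + At = At + (u x + k * \<rho> x) * Ar" by (simp add: c2_U[OF xU] algebra_simps)
    also have "\<dots> = AA x * Pa x + Qa x" unfolding id Pa_def Qa_def GG_def
    proof -
      have nz: "u x + k * \<rho> x \<noteq> 0" "u x - k * \<rho> x \<noteq> 0" "fst x \<noteq> 0"
        using W r by (auto simp: WW_def ZZ_def)
      show "- (AA x)\<^sup>2 + 2 * (real m * (k * \<rho> x) * u x / fst x) / (u x + k * \<rho> x) * AA x
     + real m / (2 * fst x * (u x + k * \<rho> x)) * ((u x - k * \<rho> x)\<^sup>2 * BB x - (u x + k * \<rho> x)\<^sup>2 * AA x)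
       = AA x * (- AA x + 2 * (real m * (k * \<rho> x) * u x / fst x) / WW x - real m * WW x / (2 * fst x))
         + real m * (ZZ x)\<^sup>2 * BB x / (2 * fst x * WW x)"
        unfolding WW_def ZZ_def by (rule alg_fin_a) (use nz in auto)
    qed
    finally show ?thesis .
  qed
  ultimately show ?thesis by (simp add: x_def)
qed

lemma beta_curve:
  assumes r2: "r2 \<in> {a..b}" and s: "s \<in> {0..T}" and xD: "(\<xi> r2 s, s) \<in> DD"
  shows "((\<lambda>s. beta m K \<gamma> \<rho> u (\<xi> r2 s, s)) has_real_derivative
          (BB (\<xi> r2 s, s) * Pb (\<xi> r2 s, s) + Qb (\<xi> r2 s, s))) (at s within {0..T})"
proof -
  define x where "x = (\<xi> r2 s, s)"
  have xU: "x \<in> U" using DD_U xD by (simp add: x_def)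
  have W: "WW x < 0" "ZZ x < 0" using WZ_neg xD by (auto simp: x_def)
  have r: "fst x > 0" using rpos[OF xU] .
  obtain Br Bt where hd: "HD (beta m K \<gamma> \<rho> u) x Br Bt" and id: "Bt + (u x - k * \<rho> x) * Br =
     - (BB x)\<^sup>2 - 2 * (real m * (k * \<rho> x) * u x / fst x) / (u x - k * \<rho> x) * BB x
     - real m / (2 * fst x * (u x - k * \<rho> x)) * ((u x - k * \<rho> x)\<^sup>2 * BB x - (u x + k * \<rho> x)\<^sup>2 * AA x)"
    using beta_ode[OF xU] W by (auto simp: WW_def ZZ_def)
  have "((\<lambda>s. beta m K \<gamma> \<rho> u (\<xi> r2 s, s)) has_real_derivative (Br * c1 K \<gamma> \<rho> u x + Bt)) (at s within {0..T})"
  proof -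
    have pd: "(\<xi> r2 has_real_derivative c1 K \<gamma> \<rho> u (\<xi> r2 s, s)) (at s within {0..T})"
      using xi_ode r2 s by auto
    show ?thesis using HD_curve[OF pd hd[unfolded x_def]] by (simp add: x_def)
  qed
  moreover have "Br * c1 K \<gamma> \<rho> u x + Bt = BB x * Pb x + Qb x"
  proof -
    have "Br * c1 K \<gamma> \<rho> u x + Bt = Bt + (u x - k * \<rho> x) * Br" by (simp add: c1_U[OF xU] algebra_simps)
    also have "\<dots> = BB x * Pb x + Qb x" unfolding id Pb_def Qb_def GG_def
    proof -
      have nz: "u x + k * \<rho> x \<noteq> 0" "u x - k * \<rho> x \<noteq> 0" "fst x \<noteq> 0"
        using W r by (auto simp: WW_def ZZ_def)
      show "- (BB x)\<^sup>2 - 2 * (real m * (k * \<rho> x) * u x / fst x) / (u x - k * \<rho> x) * BB x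
     - real m / (2 * fst x * (u x - k * \<rho> x)) * ((u x - k * \<rho> x)\<^sup>2 * BB x - (u x + k * \<rho> x)\<^sup>2 * AA x)
       = BB x * (- BB x - 2 * (real m * (k * \<rho> x) * u x / fst x) / ZZ x - real m * ZZ x / (2 * fst x))
         + real m * (WW x)\<^sup>2 * AA x / (2 * fst x * ZZ x)"
        unfolding WW_def ZZ_def by (rule alg_fin_b) (use nz in auto)
    qed
    finally show ?thesis .
  qed
  ultimately show ?thesis by (simp add: x_def)
qed

lemma DD_sub: "DD \<subseteq> U" using DD_U by blast

lemma contD: "continuous_on DD u" "continuous_on DD \<rho>" "continuous_on DD (pd_r u)"
  "continuous_on DD (pd_r \<rho>)" "continuous_on DD fst"
  using continuous_on_subset[OF su(8) DD_sub] continuous_on_subset[OF sp(8) DD_sub]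
    continuous_on_subset[OF su(6) DD_sub] continuous_on_subset[OF sp(6) DD_sub] continuous_on_fst[OF continuous_on_id]
  by auto

lemma nzD: assumes "x \<in> DD" shows "fst x \<noteq> 0" "u x + k * \<rho> x \<noteq> 0" "u x - k * \<rho> x \<noteq> 0"
  using rpos[OF DD_U[OF assms]] WZ_neg[OF assms] by (auto simp: WW_def ZZ_def)

lemma cont_AA: "continuous_on DD AA"
  unfolding AA_def by (intro continuous_intros contD) (use nzD in auto)
lemma cont_BB: "continuous_on DD BB"
  unfolding BB_def by (intro continuous_intros contD) (use nzD in auto)
lemma cont_Pa: "continuous_on DD Pa"
  unfolding Pa_def GG_def WW_def by (intro continuous_intros contD cont_AA) (use nzD in auto)
lemma cont_Pb: "continuous_on DD Pb"
  unfolding Pb_def GG_def ZZ_def by (intro continuous_intros contD cont_BB) (use nzD in auto)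

end

context eul begin

lemma main_sigma:
  assumes sg: "\<sigma> = 1 \<or> \<sigma> = (-1::real)"
    and init: "\<forall>r\<in>{a..b}. \<sigma> * alpha m K \<gamma> \<rho> u (r, 0) > 0 \<and> \<sigma> * beta m K \<gamma> \<rho> u (r, 0) < 0"
  shows "\<forall>x\<in>DD. \<sigma> * alpha m K \<gamma> \<rho> u x > 0 \<and> \<sigma> * beta m K \<gamma> \<rho> u x < 0"
proof (rule ccontr)
  assume neg: "\<not> ?thesis"
  define Bad where "Bad = {x\<in>DD. \<sigma> * AA x \<le> 0} \<union> {x\<in>DD. 0 \<le> \<sigma> * BB x}"
  have cDD: "closed DD" using DD_compact compact_imp_closed by blast
  have cl1: "closed {x\<in>DD. \<sigma> * AA x \<le> 0}"
    by (rule continuous_on_closed_Collect_le[OF _ continuous_on_const cDD]) (intro continuous_intros cont_AA)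
  have cl2: "closed {x\<in>DD. 0 \<le> \<sigma> * BB x}"
    by (rule continuous_on_closed_Collect_le[OF continuous_on_const _ cDD]) (intro continuous_intros cont_BB)
  have cl: "closed Bad" unfolding Bad_def by (rule closed_Un[OF cl1 cl2])
  have "DD \<inter> Bad = Bad" by (auto simp: Bad_def)
  then have cB: "compact Bad" using compact_Int_closed[OF DD_compact cl] by simp
  have ne: "Bad \<noteq> {}"
  proof -
    obtain x where x: "x \<in> DD" "\<not> (\<sigma> * alpha m K \<gamma> \<rho> u x > 0 \<and> \<sigma> * beta m K \<gamma> \<rho> u x < 0)"
      using neg by blast
    then have "x \<in> Bad" using alpha_U[OF DD_U[OF x(1)]] beta_U[OF DD_U[OF x(1)]] by (auto simp: Bad_def)
    then show ?thesis by blast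
  qed
  have csnd: "continuous_on Bad (\<lambda>x. snd x)" by (intro continuous_intros)
  obtain xs where xs: "xs \<in> Bad" "\<And>y. y \<in> Bad \<Longrightarrow> snd xs \<le> snd y"
    using continuous_attains_inf[OF cB ne csnd] by blast
  have good: "\<sigma> * AA y > 0 \<and> \<sigma> * BB y < 0" if "y \<in> DD" "snd y < snd xs" for y
  proof (rule ccontr)
    assume "\<not> ?thesis"
    then have "y \<in> Bad" using that by (auto simp: Bad_def)
    then show False using xs(2)[of y] that by simp
  qed
  obtain r t where xsrt: "xs = (r, t)" by (cases xs)
  have xsD: "xs \<in> DD" using xs(1) by (auto simp: Bad_def)
  then obtain r1 r2 where t: "t \<in> {0..T}" and r12: "r1 \<in> {a..b}" "r2 \<in> {a..b}"
    and eqs: "\<psi> r1 t = r" "\<xi> r2 t = r"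
    using DD_iff xsrt by auto
  have onD: "(\<psi> r1 s, s) \<in> DD" "(\<xi> r2 s, s) \<in> DD" if "s \<in> {0..t}" for s
    using DD_back[OF r12 t _ that] eqs by auto
  have t0: "0 \<le> t" using t by simp
  have sub: "{0..t} \<subseteq> {0..T}" using t by auto
  have fa: "\<sigma> * alpha m K \<gamma> \<rho> u (\<psi> r1 t, t) > 0"
  proof (rule pos_persist[where f = "\<lambda>s. \<sigma> * alpha m K \<gamma> \<rho> u (\<psi> r1 s, s)"
        and f' = "\<lambda>s. \<sigma> * (AA (\<psi> r1 s, s) * Pa (\<psi> r1 s, s) + Qa (\<psi> r1 s, s))"
        and p = "\<lambda>s. Pa (\<psi> r1 s, s)", OF t0])
    show "((\<lambda>s. \<sigma> * alpha m K \<gamma> \<rho> u (\<psi> r1 s, s)) has_real_derivative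
        \<sigma> * (AA (\<psi> r1 s, s) * Pa (\<psi> r1 s, s) + Qa (\<psi> r1 s, s))) (at s within {0..t})"
      if s: "s \<in> {0..t}" for s
    proof -
      have sT: "s \<in> {0..T}" using s sub by auto
      show ?thesis
        by (rule DERIV_cmult[OF DERIV_subset[OF alpha_curve[OF r12(1) sT onD(1)[OF s]] sub]])
    qed
    have cc: "continuous_on {0..t} (\<lambda>s. (\<psi> r1 s, s))"
      by (intro continuous_on_Pair continuous_on_id continuous_on_subset[OF psi_cont_s[OF r12(1)] sub])
    show "continuous_on {0..t} (\<lambda>s. Pa (\<psi> r1 s, s))"
      by (rule continuous_on_compose2[OF cont_Pa cc]) (use onD in auto)
    show "\<sigma> * (AA (\<psi> r1 s, s) * Pa (\<psi> r1 s, s) + Qa (\<psi> r1 s, s))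
          \<ge> Pa (\<psi> r1 s, s) * (\<sigma> * alpha m K \<gamma> \<rho> u (\<psi> r1 s, s))"
      if s: "0 \<le> s" "s < t" "\<sigma> * alpha m K \<gamma> \<rho> u (\<psi> r1 s, s) > 0" for s
    proof -
      define x where "x = (\<psi> r1 s, s)"
      have xD: "x \<in> DD" using onD(1)[of s] s by (auto simp: x_def)
      have gx: "\<sigma> * BB x < 0" using good[OF xD] s xsrt by (auto simp: x_def)
      have al: "alpha m K \<gamma> \<rho> u x = AA x" using alpha_U[OF DD_U[OF xD]] .
      have W: "WW x < 0" using WZ_neg[OF xD] by simp
      have r: "fst x > 0" using rpos[OF DD_U[OF xD]] .
      have "\<sigma> * Qa x = real m * (ZZ x)\<^sup>2 * (\<sigma> * BB x) / (2 * fst x * WW x)"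
        by (simp add: Qa_def algebra_simps)
      also have "\<dots> \<ge> 0"
      proof (rule divide_nonpos_neg)
        show "real m * (ZZ x)\<^sup>2 * (\<sigma> * BB x) \<le> 0"
          by (rule mult_nonneg_nonpos) (use gx in auto)
        show "2 * fst x * WW x < 0" using r W by (simp add: mult_pos_neg)
      qed
      finally have "\<sigma> * Qa x \<ge> 0" .
      then show ?thesis unfolding x_def[symmetric] al by (simp add: algebra_simps)
    qed
    show "\<sigma> * alpha m K \<gamma> \<rho> u (\<psi> r1 0, 0) > 0" using init r12 psi_init by auto
  qed
  have fb: "- \<sigma> * beta m K \<gamma> \<rho> u (\<xi> r2 t, t) > 0"
  proof (rule pos_persist[where f = "\<lambda>s. - \<sigma> * beta m K \<gamma> \<rho> u (\<xi> r2 s, s)"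
        and f' = "\<lambda>s. - \<sigma> * (BB (\<xi> r2 s, s) * Pb (\<xi> r2 s, s) + Qb (\<xi> r2 s, s))"
        and p = "\<lambda>s. Pb (\<xi> r2 s, s)", OF t0])
    show "((\<lambda>s. - \<sigma> * beta m K \<gamma> \<rho> u (\<xi> r2 s, s)) has_real_derivative
        - \<sigma> * (BB (\<xi> r2 s, s) * Pb (\<xi> r2 s, s) + Qb (\<xi> r2 s, s))) (at s within {0..t})"
      if s: "s \<in> {0..t}" for s
    proof -
      have sT: "s \<in> {0..T}" using s sub by auto
      show ?thesis
        by (rule DERIV_cmult[OF DERIV_subset[OF beta_curve[OF r12(2) sT onD(2)[OF s]] sub]])
    qed
    have cc: "continuous_on {0..t} (\<lambda>s. (\<xi> r2 s, s))"
      by (intro continuous_on_Pair continuous_on_id continuous_on_subset[OF xi_cont_s[OF r12(2)] sub])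
    show "continuous_on {0..t} (\<lambda>s. Pb (\<xi> r2 s, s))"
      by (rule continuous_on_compose2[OF cont_Pb cc]) (use onD in auto)
    show "- \<sigma> * (BB (\<xi> r2 s, s) * Pb (\<xi> r2 s, s) + Qb (\<xi> r2 s, s))
          \<ge> Pb (\<xi> r2 s, s) * (- \<sigma> * beta m K \<gamma> \<rho> u (\<xi> r2 s, s))"
      if s: "0 \<le> s" "s < t" "- \<sigma> * beta m K \<gamma> \<rho> u (\<xi> r2 s, s) > 0" for s
    proof -
      define x where "x = (\<xi> r2 s, s)"
      have xD: "x \<in> DD" using onD(2)[of s] s by (auto simp: x_def)
      have gx: "\<sigma> * AA x > 0" using good[OF xD] s xsrt by (auto simp: x_def)
      have be: "beta m K \<gamma> \<rho> u x = BB x" using beta_U[OF DD_U[OF xD]] .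
      have Z: "ZZ x < 0" using WZ_neg[OF xD] by simp
      have r: "fst x > 0" using rpos[OF DD_U[OF xD]] .
      have "\<sigma> * Qb x = real m * (WW x)\<^sup>2 * (\<sigma> * AA x) / (2 * fst x * ZZ x)"
        by (simp add: Qb_def algebra_simps)
      also have "\<dots> \<le> 0"
      proof (rule divide_nonneg_neg)
        show "0 \<le> real m * (WW x)\<^sup>2 * (\<sigma> * AA x)" using gx by simp
        show "2 * fst x * ZZ x < 0" using r Z by (simp add: mult_pos_neg)
      qed
      finally have "\<sigma> * Qb x \<le> 0" .
      then show ?thesis unfolding x_def[symmetric] be by (simp add: algebra_simps)
    qed
    show "- \<sigma> * beta m K \<gamma> \<rho> u (\<xi> r2 0, 0) > 0" using init r12 xi_init by auto
  qed
  have xsU: "xs \<in> U" using DD_U[OF xsD] .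
  have "\<sigma> * AA xs > 0" using fa eqs(1) alpha_U[OF xsU] xsrt by simp
  moreover have "\<sigma> * BB xs < 0" using fb eqs(2) beta_U[OF xsU] xsrt by simp
  ultimately have "xs \<notin> Bad" by (auto simp: Bad_def)
  then show False using xs(1) by simp
qed

lemma final:
  "((\<forall>r\<in>{a..b}. alpha m K \<gamma> \<rho> u (r, 0) > 0 \<and> beta m K \<gamma> \<rho> u (r, 0) < 0)
      \<longrightarrow> (\<forall>x\<in>DD. alpha m K \<gamma> \<rho> u x > 0 \<and> beta m K \<gamma> \<rho> u x < 0))
   \<and> ((\<forall>r\<in>{a..b}. alpha m K \<gamma> \<rho> u (r, 0) < 0 \<and> beta m K \<gamma> \<rho> u (r, 0) > 0)
      \<longrightarrow> (\<forall>x\<in>DD. alpha m K \<gamma> \<rho> u x < 0 \<and> beta m K \<gamma> \<rho> u x > 0))"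
proof (intro conjI impI)
  assume h: "\<forall>r\<in>{a..b}. alpha m K \<gamma> \<rho> u (r, 0) > 0 \<and> beta m K \<gamma> \<rho> u (r, 0) < 0"
  have "\<forall>x\<in>DD. 1 * alpha m K \<gamma> \<rho> u x > 0 \<and> 1 * beta m K \<gamma> \<rho> u x < 0"
    by (rule main_sigma) (use h in simp_all)
  then show "\<forall>x\<in>DD. alpha m K \<gamma> \<rho> u x > 0 \<and> beta m K \<gamma> \<rho> u x < 0" by simp
next
  assume h: "\<forall>r\<in>{a..b}. alpha m K \<gamma> \<rho> u (r, 0) < 0 \<and> beta m K \<gamma> \<rho> u (r, 0) > 0"
  have "\<forall>x\<in>DD. (-1) * alpha m K \<gamma> \<rho> u x > 0 \<and> (-1) * beta m K \<gamma> \<rho> u x < 0"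
    by (rule main_sigma) (use h in simp_all)
  then show "\<forall>x\<in>DD. alpha m K \<gamma> \<rho> u x < 0 \<and> beta m K \<gamma> \<rho> u x > 0" by simp
qed

end

theorem mainTheorem6:
  fixes m :: nat and K \<gamma> a b T :: real
    and \<rho> u :: "real \<times> real \<Rightarrow> real"
    and \<xi> \<psi> :: "real \<Rightarrow> real \<Rightarrow> real"
    and U :: "(real \<times> real) set"
  assumes m: "m \<in> {1, 2}"
    and K: "K > 0"
    and gam: "\<gamma> = 3"
    and ab: "0 < a" "a \<le> b"
    and T: "T > 0"
    and U_open: "open U"
    and U_pos: "U \<subseteq> {x. fst x > 0}"
    and smooth_rho: "smooth_on2 U \<rho>"
    and smooth_u: "smooth_on2 U u"
    and rho_pos: "\<forall>x\<in>U. \<rho> x > 0"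
    and mass: "\<forall>x\<in>U. pd_t (\<lambda>(r, t). r ^ m * \<rho> (r, t)) x
                       + pd_r (\<lambda>(r, t). r ^ m * \<rho> (r, t) * u (r, t)) x = 0"
    and momentum: "\<forall>x\<in>U. pd_t (\<lambda>(r, t). r ^ m * \<rho> (r, t) * u (r, t)) x
                       + pd_r (\<lambda>(r, t). r ^ m * \<rho> (r, t) * (u (r, t))\<^sup>2) x
                       + (fst x) ^ m * pd_r (\<lambda>y. K * (\<rho> y) powr \<gamma>) x = 0"
    and xi_dom: "\<forall>r0\<in>{a..b}. \<forall>t\<in>{0..T}. (\<xi> r0 t, t) \<in> U"
    and psi_dom: "\<forall>r0\<in>{a..b}. \<forall>t\<in>{0..T}. (\<psi> r0 t, t) \<in> U"
    and xi_ode: "\<forall>r0\<in>{a..b}. \<forall>t\<in>{0..T}.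
                   ((\<xi> r0) has_real_derivative c1 K \<gamma> \<rho> u (\<xi> r0 t, t)) (at t within {0..T})"
    and psi_ode: "\<forall>r0\<in>{a..b}. \<forall>t\<in>{0..T}.
                   ((\<psi> r0) has_real_derivative c2 K \<gamma> \<rho> u (\<psi> r0 t, t)) (at t within {0..T})"
    and xi_init: "\<forall>r0\<in>{a..b}. \<xi> r0 0 = r0"
    and psi_init: "\<forall>r0\<in>{a..b}. \<psi> r0 0 = r0"
    and supersonic: "\<forall>x\<in>dom_infl \<xi> \<psi> {a..b} T.
                       c1 K \<gamma> \<rho> u x < c2 K \<gamma> \<rho> u x \<and> c2 K \<gamma> \<rho> u x < 0"
  shows "((\<forall>r\<in>{a..b}. alpha m K \<gamma> \<rho> u (r, 0) > 0 \<and> beta m K \<gamma> \<rho> u (r, 0) < 0)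
            \<longrightarrow> (\<forall>x\<in>dom_infl \<xi> \<psi> {a..b} T. alpha m K \<gamma> \<rho> u x > 0 \<and> beta m K \<gamma> \<rho> u x < 0))
       \<and> ((\<forall>r\<in>{a..b}. alpha m K \<gamma> \<rho> u (r, 0) < 0 \<and> beta m K \<gamma> \<rho> u (r, 0) > 0)
            \<longrightarrow> (\<forall>x\<in>dom_infl \<xi> \<psi> {a..b} T. alpha m K \<gamma> \<rho> u x < 0 \<and> beta m K \<gamma> \<rho> u x > 0))"
proof -
  have E: "eul m K \<gamma> a b T \<rho> u \<xi> \<psi> U" using assms by (rule eul.intro)
  show ?thesis by (rule eul.final[OF E])
qed

end
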